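(* (SEM-ME) Let $M$ be a canonical linear SEM-ME satisfying SEM-ME faithfulness part (a). Then every model in the AOG equivalence class of $M$ satisfies SEM-ME faithfulness part (a), and every canonical SEM-ME whose mixing matrix equals $\mathbf W^{ME}(M)$ up to permutation and nonzero scaling of columns and which satisfies part (a) belongs to the AOG equivalence class of $M$. Hence, under separability and part (a), $M$ is identifiable exactly up to its AOG equivalence class. (SEM-UR) The analogous statement holds for a linear SEM-UR satisfying SEM-UR faithfulness part (a) and its AOG equivalence class.
   Context: Linear SEM-ME (canonical form): underlying variables $V_1,\dots,V_p$ partitioned into unobserved $\mathcal Z$ and observed $\mathcal Y$, $V_i=\sum_{V_j\in Pa(V_i)}c_{ij}V_j+N_{V_i}$ over a DAG (edge $V_j\to V_i$ of weight $c_{ij}$ iff $c_{ij}\ne0$), measurements $U_i=Z_i+N_{U_i}$, independent noises. A u-leaf node is a $Z$-variable with no children; all others are nu-leaf nodes; in canonical form u-leaf nodes have zero noise and nu-leaf nodes nondegenerate noise. A model is specified by its weighted DAG on the underlying variables and its set of u-leaf nodes. The mixing matrix $\mathbf W^{ME}$ has rows indexed by underlying variables, columns by noise terms $N_{V'}$ of nu-leaf nodes, $(V,N_{V'})$ entry = total causal effect of $V'$ on $V$ (sum over directed paths of products of weights; $1$ if $V=V'$). Linear SEM-UR: $H=N_H$, $X=\mathbf BH+\mathbf AX+N_X$ with $\mathbf A$ strictly lower triangular, independent noises; diagram: edges $H_i\to X_j$ iff $b_{ji}\ne0$, $X_k\to X_j$ iff $a_{jk}\ne0$; mixing matrix $\mathbf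 W^{UR}=[(\mathbf I-\mathbf A)^{-1}\mathbf B\;\;(\mathbf I-\mathbf A)^{-1}]$, rows indexed by observed variables, columns by noise terms. Separability: the mixing matrix can be recovered from the distribution of the observed variables up to permutation and nonzero scaling of its columns. Faithfulness part (a): SEM-ME: the total causal effect of any underlying variable on any of its descendants is nonzero. SEM-UR: the total causal effect of any observed or latent variable on any of its descendants is nonzero. Ancestral ordered grouping (AOG). SEM-ME: each nu-leaf node in its own group; each u-leaf node $Z_j$ goes into the group of a parent $V_i$ if $Z_j$ has no other parents or all its other parents are ancestors of $V_i$, else into a singleton group. SEM-UR: each observed variable in its own group; each latent $H_j$ goes into the group of a child $X_i$ if $H_j$ has no other children or all its other children are descendants of $X_i$, else into a singleton group. AOG equivalence class of $M$: the set of models (canonical SEM-ME on the same underlying variables; resp. SEM-UR on the same observed variables with the same number of latent variables) whose mixing matrix equals that of $M$ up to permutation and nonzero scaling of columns and whose AOG partition coincides with that of $M$ (for SEM-UR, up to relabeling latent variables). *)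

theory Defs
  imports "HOL-Analysis.Analysis"
begin

definition wedges :: "'v set \<Rightarrow> ('v \<Rightarrow> 'v \<Rightarrow> real) \<Rightarrow> ('v \<times> 'v) set" where
  "wedges V w = {(u, v). u \<in> V \<and> v \<in> V \<and> w u v \<noteq> 0}"

definition is_dpath :: "'v set \<Rightarrow> ('v \<Rightarrow> 'v \<Rightarrow> real) \<Rightarrow> 'v list \<Rightarrow> bool" where
  "is_dpath V w xs \<longleftrightarrow> xs \<noteq> [] \<and> set xs \<subseteq> V \<and> distinct xs \<and>
     (\<forall>i. Suc i < length xs \<longrightarrow> w (xs ! i) (xs ! Suc i) \<noteq> 0)"

definition path_weight :: "('v \<Rightarrow> 'v \<Rightarrow> real) \<Rightarrow> 'v list \<Rightarrow> real" where
  "path_weight w xs = (\<Prod>i<length xs - 1. w (xs ! i) (xs ! Suc i))"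

text \<open>Total causal effect of a on b: sum over directed paths from a to b of the
  product of edge weights (equals 1 for a = b in a DAG: the trivial path).\<close>
definition total_effect :: "'v set \<Rightarrow> ('v \<Rightarrow> 'v \<Rightarrow> real) \<Rightarrow> 'v \<Rightarrow> 'v \<Rightarrow> real" where
  "total_effect V w a b =
     (\<Sum>xs \<in> {xs. is_dpath V w xs \<and> hd xs = a \<and> last xs = b}. path_weight w xs)"

definition faithful_a :: "'v set \<Rightarrow> ('v \<Rightarrow> 'v \<Rightarrow> real) \<Rightarrow> bool" where
  "faithful_a V w \<longleftrightarrow> (\<forall>a b. (a, b) \<in> (wedges V w)\<^sup>+ \<longrightarrow> total_effect V w a b \<noteq> 0)"

text \<open>Underlying variables V_0..V_(p-1) (indices < p); Z is the set of indices of
  unobserved variables; c i j is the weight c_ij of the edge V_j -> V_i.\<close>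

definition me_w :: "(nat \<Rightarrow> nat \<Rightarrow> real) \<Rightarrow> nat \<Rightarrow> nat \<Rightarrow> real" where
  "me_w c u v = c v u"

definition sem_me :: "nat \<Rightarrow> nat set \<Rightarrow> (nat \<Rightarrow> nat \<Rightarrow> real) \<Rightarrow> bool" where
  "sem_me p Z c \<longleftrightarrow> Z \<subseteq> {..<p} \<and> acyclic (wedges {..<p} (me_w c))"

definition me_parents :: "nat \<Rightarrow> (nat \<Rightarrow> nat \<Rightarrow> real) \<Rightarrow> nat \<Rightarrow> nat set" where
  "me_parents p c i = {j. j < p \<and> c i j \<noteq> 0}"

definition me_children :: "nat \<Rightarrow> (nat \<Rightarrow> nat \<Rightarrow> real) \<Rightarrow> nat \<Rightarrow> nat set" where
  "me_children p c j = {i. i < p \<and> c i j \<noteq> 0}"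

definition me_anc :: "nat \<Rightarrow> (nat \<Rightarrow> nat \<Rightarrow> real) \<Rightarrow> nat \<Rightarrow> nat \<Rightarrow> bool" where
  "me_anc p c k i \<longleftrightarrow> (k, i) \<in> (wedges {..<p} (me_w c))\<^sup>+"

definition u_leaf :: "nat \<Rightarrow> nat set \<Rightarrow> (nat \<Rightarrow> nat \<Rightarrow> real) \<Rightarrow> nat \<Rightarrow> bool" where
  "u_leaf p Z c j \<longleftrightarrow> j \<in> Z \<and> me_children p c j = {}"

definition nu_leaves :: "nat \<Rightarrow> nat set \<Rightarrow> (nat \<Rightarrow> nat \<Rightarrow> real) \<Rightarrow> nat set" where
  "nu_leaves p Z c = {j. j < p \<and> \<not> u_leaf p Z c j}"

text \<open>Mixing matrix W^ME: entry (V_v, N_{V_j}) = total causal effect of V_j on V_v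
  (rows v < p, columns j in the nu-leaf nodes).\<close>
definition me_mix :: "nat \<Rightarrow> (nat \<Rightarrow> nat \<Rightarrow> real) \<Rightarrow> nat \<Rightarrow> nat \<Rightarrow> real" where
  "me_mix p c v j = total_effect {..<p} (me_w c) j v"

definition me_faithful :: "nat \<Rightarrow> (nat \<Rightarrow> nat \<Rightarrow> real) \<Rightarrow> bool" where
  "me_faithful p c \<longleftrightarrow> faithful_a {..<p} (me_w c)"

definition me_mix_equiv ::
  "nat \<Rightarrow> nat set \<Rightarrow> (nat \<Rightarrow> nat \<Rightarrow> real) \<Rightarrow> (nat \<Rightarrow> nat \<Rightarrow> real) \<Rightarrow> bool" where
  "me_mix_equiv p Z c c' \<longleftrightarrow>
     (\<exists>\<sigma> (l :: nat \<Rightarrow> real). bij_betw \<sigma> (nu_leaves p Z c) (nu_leaves p Z c') \<and>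
        (\<forall>j \<in> nu_leaves p Z c. l j \<noteq> 0) \<and>
        (\<forall>v < p. \<forall>j \<in> nu_leaves p Z c. me_mix p c' v (\<sigma> j) = l j * me_mix p c v j))"

definition me_aog_parent :: "nat \<Rightarrow> (nat \<Rightarrow> nat \<Rightarrow> real) \<Rightarrow> nat \<Rightarrow> nat \<Rightarrow> bool" where
  "me_aog_parent p c j i \<longleftrightarrow>
     i \<in> me_parents p c j \<and> (\<forall>k \<in> me_parents p c j. k \<noteq> i \<longrightarrow> me_anc p c k i)"

definition me_aog :: "nat \<Rightarrow> nat set \<Rightarrow> (nat \<Rightarrow> nat \<Rightarrow> real) \<Rightarrow> nat set set" where
  "me_aog p Z c =
     {insert i {j. u_leaf p Z c j \<and> me_aog_parent p c j i} | i. i \<in> nu_leaves p Z c}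
     \<union> {{j} | j. u_leaf p Z c j \<and> \<not> (\<exists>i. me_aog_parent p c j i)}"

definition me_aog_class :: "nat \<Rightarrow> nat set \<Rightarrow> (nat \<Rightarrow> nat \<Rightarrow> real) \<Rightarrow> (nat \<Rightarrow> nat \<Rightarrow> real) set" where
  "me_aog_class p Z c =
     {c'. sem_me p Z c' \<and> me_mix_equiv p Z c c' \<and> me_aog p Z c' = me_aog p Z c}"

text \<open>Latent variables indexed by the finite type 'h, observed variables by the finite
  type 'x. Diagram vertices: Inl h (latent H_h) and Inr x (observed X_x).\<close>

definition ur_w :: "real^'x^'x \<Rightarrow> real^'h^'x \<Rightarrow> ('h + 'x) \<Rightarrow> ('h + 'x) \<Rightarrow> real" where
  "ur_w A B u v = (case (u, v) of
       (Inl h, Inr j) \<Rightarrow> B $ j $ h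
     | (Inr k, Inr j) \<Rightarrow> A $ j $ k
     | _ \<Rightarrow> 0)"

definition sem_ur :: "real^'x^'x \<Rightarrow> bool" where
  "sem_ur A \<longleftrightarrow> (\<exists>ord :: 'x \<Rightarrow> nat. inj ord \<and> (\<forall>j k. A $ j $ k \<noteq> 0 \<longrightarrow> ord k < ord j))"

definition ur_mix :: "real^'x^'x \<Rightarrow> real^'h^'x \<Rightarrow> 'x \<Rightarrow> ('h + 'x) \<Rightarrow> real" where
  "ur_mix A B i col = (case col of
       Inl h \<Rightarrow> (matrix_inv (mat 1 - A) ** B) $ i $ h
     | Inr k \<Rightarrow> matrix_inv (mat 1 - A) $ i $ k)"

definition ur_faithful :: "real^'x^'x \<Rightarrow> real^'h^'x \<Rightarrow> bool" where
  "ur_faithful A B \<longleftrightarrow> faithful_a UNIV (ur_w A B)"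

definition ur_mix_equiv :: "real^'x^'x \<Rightarrow> real^'h^'x \<Rightarrow> real^'x^'x \<Rightarrow> real^'h^'x \<Rightarrow> bool" where
  "ur_mix_equiv A B A' B' \<longleftrightarrow>
     (\<exists>(\<sigma> :: 'h + 'x \<Rightarrow> 'h + 'x) (l :: 'h + 'x \<Rightarrow> real). bij \<sigma> \<and> (\<forall>col. l col \<noteq> 0) \<and>
        (\<forall>i col. ur_mix A' B' i (\<sigma> col) = l col * ur_mix A B i col))"

definition ur_desc :: "real^'x^'x \<Rightarrow> real^'h^'x \<Rightarrow> ('h + 'x) \<Rightarrow> ('h + 'x) \<Rightarrow> bool" where
  "ur_desc A B u v \<longleftrightarrow> (u, v) \<in> (wedges UNIV (ur_w A B))\<^sup>+"

definition ur_children :: "real^'h^'x \<Rightarrow> 'h \<Rightarrow> 'x set" where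
  "ur_children B h = {i. B $ i $ h \<noteq> 0}"

definition ur_aog_child :: "real^'x^'x \<Rightarrow> real^'h^'x \<Rightarrow> 'h \<Rightarrow> 'x \<Rightarrow> bool" where
  "ur_aog_child A B h i \<longleftrightarrow>
     i \<in> ur_children B h \<and> (\<forall>k \<in> ur_children B h. k \<noteq> i \<longrightarrow> ur_desc A B (Inr i) (Inr k))"

definition ur_aog :: "real^'x^'x \<Rightarrow> real^'h^'x \<Rightarrow> ('h + 'x) set set" where
  "ur_aog A B =
     {insert (Inr i) {Inl h | h. ur_aog_child A B h i} | i. True}
     \<union> {{Inl h} | h. \<not> (\<exists>i. ur_aog_child A B h i)}"

definition ur_aog_class :: "real^'x^'x \<Rightarrow> real^'h^'x \<Rightarrow> ((real^'x^'x) \<times> (real^'h^'x)) set" where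
  "ur_aog_class A B =
     {(A', B'). sem_ur A' \<and> ur_mix_equiv A B A' B' \<and>
        (\<exists>\<pi> :: 'h \<Rightarrow> 'h. bij \<pi> \<and> ur_aog A' B' = (\<lambda>G. map_sum \<pi> id ` G) ` ur_aog A B)}"

end

theory Submission
  imports Defs
begin

lemma distinct_hd_last:
  assumes "distinct xs" "xs \<noteq> []" "hd xs = last xs" shows "xs = [hd xs]"
proof (cases xs)
  case (Cons x ys)
  show ?thesis
  proof (cases ys)
    case Nil then show ?thesis using Cons by simp
  next
    case (Cons y zs)
    then have "last xs \<in> set ys" using \<open>xs = x # ys\<close> by simp
    then show ?thesis using assms \<open>xs = x # ys\<close> by simp
  qed
qed (use assms in simp)

lemma is_dpath_single[simp]: "is_dpath V w [x] \<longleftrightarrow> x \<in> V"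
  by (simp add: is_dpath_def)

lemma is_dpath_Cons2:
  "is_dpath V w (x # y # ys) \<longleftrightarrow> x \<in> V \<and> x \<notin> set (y # ys) \<and> w x y \<noteq> 0 \<and> is_dpath V w (y # ys)"
proof -
  have "(\<forall>i. Suc i < length (x # y # ys) \<longrightarrow> w ((x # y # ys) ! i) ((x # y # ys) ! Suc i) \<noteq> 0)
     \<longleftrightarrow> w x y \<noteq> 0 \<and> (\<forall>i. Suc i < length (y # ys) \<longrightarrow> w ((y # ys) ! i) ((y # ys) ! Suc i) \<noteq> 0)"
    (is "?L \<longleftrightarrow> ?R")
  proof
    assume ?L
    then show ?R by (metis Suc_less_eq length_Cons nth_Cons_0 nth_Cons_Suc zero_less_Suc)
  next
    assume R: ?R
    show ?L
    proof (intro allI impI)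
      fix i assume "Suc i < length (x # y # ys)"
      then show "w ((x # y # ys) ! i) ((x # y # ys) ! Suc i) \<noteq> 0"
        using R by (cases i) auto
    qed
  qed
  then show ?thesis by (auto simp: is_dpath_def)
qed

lemma path_weight_Cons2: "path_weight w (x # y # ys) = w x y * path_weight w (y # ys)"
proof -
  have "length (x # y # ys) - 1 = Suc (length ys)" by simp
  then show ?thesis unfolding path_weight_def
    by (simp only: prod.lessThan_Suc_shift) simp
qed

lemma is_dpath_tl: "is_dpath V w (x # y # ys) \<Longrightarrow> is_dpath V w (y # ys)"
  by (simp add: is_dpath_Cons2)

lemma dpath_rtrancl:
  "is_dpath V w xs \<Longrightarrow> z \<in> set xs \<Longrightarrow> (hd xs, z) \<in> (wedges V w)\<^sup>*"
proof (induction xs)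
  case Nil then show ?case by simp
next
  case (Cons x ys)
  show ?case
  proof (cases ys)
    case Nil then show ?thesis using Cons by simp
  next
    case (Cons y zs)
    with Cons.prems have p: "x \<in> V" "w x y \<noteq> 0" "is_dpath V w ys" by (auto simp: is_dpath_Cons2)
    have "y \<in> V" using p(3) Cons by (auto simp: is_dpath_def)
    have e: "(x, y) \<in> wedges V w" using p \<open>y \<in> V\<close> by (simp add: wedges_def)
    show ?thesis
    proof (cases "z = x")
      case True then show ?thesis by simp
    next
      case False
      then have "z \<in> set ys" using Cons.prems by simp
      then have "(y, z) \<in> (wedges V w)\<^sup>*" using Cons.IH p(3) \<open>ys = y # zs\<close> by simp
      then show ?thesis using e by (simp add: converse_rtrancl_into_rtrancl)
    qed
  qed
qed

lemma dpath_trancl: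
  "is_dpath V w xs \<Longrightarrow> hd xs \<noteq> last xs \<Longrightarrow> (hd xs, last xs) \<in> (wedges V w)\<^sup>+"
proof (induction xs)
  case Nil then show ?case by (simp add: is_dpath_def)
next
  case (Cons x ys)
  show ?case
  proof (cases ys)
    case Nil then show ?thesis using Cons by simp
  next
    case (Cons y zs)
    with Cons.prems have p: "x \<in> V" "w x y \<noteq> 0" "is_dpath V w ys" by (auto simp: is_dpath_Cons2)
    have "y \<in> V" using p(3) Cons by (auto simp: is_dpath_def)
    have e: "(x, y) \<in> wedges V w" using p \<open>y \<in> V\<close> by (simp add: wedges_def)
    show ?thesis
    proof (cases "y = last ys")
      case True then show ?thesis using e \<open>ys = y # zs\<close> by simp
    next
      case False
      then have "(y, last ys) \<in> (wedges V w)\<^sup>+" using Cons.IH p(3) \<open>ys = y # zs\<close> by simp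
      then show ?thesis using e \<open>ys = y # zs\<close> by (simp add: trancl_into_trancl2)
    qed
  qed
qed

definition paths where "paths V w a b = {xs. is_dpath V w xs \<and> hd xs = a \<and> last xs = b}"

lemma te_paths: "total_effect V w a b = (\<Sum>xs\<in>paths V w a b. path_weight w xs)"
  by (simp add: total_effect_def paths_def)

lemma finite_paths: "finite V \<Longrightarrow> finite (paths V w a b)"
  by (rule finite_subset[OF _ finite_subset_distinct[of V]]) (auto simp: paths_def is_dpath_def)

lemma te_nz_V: assumes "total_effect V w a b \<noteq> 0" shows "a \<in> V" "b \<in> V"
proof -
  from assms obtain xs where "xs \<in> paths V w a b" unfolding te_paths by (meson sum.neutral)
  then have "is_dpath V w xs" "hd xs = a" "last xs = b" by (auto simp: paths_def)
  then show "a \<in> V" "b \<in> V" by (auto simp: is_dpath_def)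
qed

lemma te_self: assumes "a \<in> V" shows "total_effect V w a a = 1"
proof -
  have "paths V w a a = {[a]}"
  proof (intro equalityI subsetI)
    fix xs assume "xs \<in> paths V w a a"
    then have "distinct xs" "xs \<noteq> []" "hd xs = last xs" "hd xs = a" by (auto simp: paths_def is_dpath_def)
    then show "xs \<in> {[a]}" using distinct_hd_last[of xs] by simp
  next
    fix xs assume "xs \<in> {[a]}"
    then show "xs \<in> paths V w a a" using assms by (simp add: paths_def)
  qed
  then show ?thesis by (simp add: te_paths path_weight_def)
qed

lemma te_trancl: assumes "total_effect V w a b \<noteq> 0" "a \<noteq> b"
  shows "(a, b) \<in> (wedges V w)\<^sup>+"
proof -
  from assms obtain xs where "xs \<in> paths V w a b" unfolding te_paths by (meson sum.neutral)
  then show ?thesis using dpath_trancl assms(2) by (auto simp: paths_def)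
qed

lemma te_first:
  assumes fin: "finite V" and ac: "acyclic (wedges V w)" and a: "a \<in> V" and ab: "a \<noteq> b"
  shows "total_effect V w a b = (\<Sum>m\<in>V. w a m * total_effect V w m b)"
proof -
  define V' where "V' = {m \<in> V. w a m \<noteq> 0}"
  have "(\<Sum>m\<in>V. w a m * total_effect V w m b) = (\<Sum>m\<in>V'. w a m * total_effect V w m b)"
    by (rule sum.mono_neutral_right) (auto simp: V'_def fin)
  also have "\<dots> = (\<Sum>m\<in>V'. \<Sum>ys\<in>paths V w m b. w a m * path_weight w ys)"
    by (simp add: te_paths sum_distrib_left)
  also have "\<dots> = (\<Sum>(m, ys)\<in>Sigma V' (\<lambda>m. paths V w m b). w a m * path_weight w ys)"
    by (rule sum.Sigma) (auto simp: V'_def fin finite_paths)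
  also have "\<dots> = (\<Sum>xs\<in>paths V w a b. path_weight w xs)"
  proof (rule sum.reindex_bij_witness[where i = "\<lambda>xs. (hd (tl xs), tl xs)" and j = "\<lambda>(m, ys). a # ys"])
    fix mys assume "mys \<in> Sigma V' (\<lambda>m. paths V w m b)"
    then obtain m ys where mys: "mys = (m, ys)" "m \<in> V" "w a m \<noteq> 0" "is_dpath V w ys" "hd ys = m" "last ys = b"
      by (auto simp: V'_def paths_def)
    then have ysne: "ys \<noteq> []" by (auto simp: is_dpath_def)
    then obtain zs where yz: "ys = m # zs" using mys(5) by (cases ys) auto
    show "(\<lambda>xs. (hd (tl xs), tl xs)) (case mys of (m, ys) \<Rightarrow> a # ys) = mys" by (simp add: mys yz)
    have "a \<notin> set ys"
    proof
      assume "a \<in> set ys"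
      then have "(m, a) \<in> (wedges V w)\<^sup>*" using dpath_rtrancl[OF mys(4)] mys(5) by blast
      moreover have "(a, m) \<in> wedges V w" using a mys by (simp add: wedges_def)
      ultimately have "(a, a) \<in> (wedges V w)\<^sup>+" by (meson rtrancl_into_trancl2)
      then show False using ac by (simp add: acyclic_def)
    qed
    then show "(case mys of (m, ys) \<Rightarrow> a # ys) \<in> paths V w a b"
      using mys yz a by (auto simp: paths_def is_dpath_Cons2)
    show "path_weight w (case mys of (m, ys) \<Rightarrow> a # ys) = (case mys of (m, ys) \<Rightarrow> w a m * path_weight w ys)"
      by (simp add: mys yz path_weight_Cons2)
  next
    fix xs assume xs: "xs \<in> paths V w a b"
    then have p: "is_dpath V w xs" "hd xs = a" "last xs = b" by (auto simp: paths_def)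
    then have "xs \<noteq> []" by (auto simp: is_dpath_def)
    then obtain ys where xy: "xs = a # ys" using p(2) by (cases xs) auto
    then have "ys \<noteq> []" using p(3) ab by auto
    then obtain y zs where yz: "ys = y # zs" by (cases ys) auto
    have pp: "a \<in> V" "w a y \<noteq> 0" "is_dpath V w ys" using p(1) by (auto simp: xy yz is_dpath_Cons2)
    then have "y \<in> V" by (auto simp: is_dpath_def yz)
    show "(case (hd (tl xs), tl xs) of (m, ys) \<Rightarrow> a # ys) = xs" by (simp add: xy)
    show "(hd (tl xs), tl xs) \<in> Sigma V' (\<lambda>m. paths V w m b)"
      using pp \<open>y \<in> V\<close> p(3) by (auto simp: xy yz V'_def paths_def)
  qed
  finally show ?thesis by (simp add: te_paths)
qed

definition flipw :: "('v \<Rightarrow> 'v \<Rightarrow> real) \<Rightarrow> 'v \<Rightarrow> 'v \<Rightarrow> real" where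
  "flipw w u v = w v u"

lemma flipw_flipw: "flipw (flipw w) = w"
  by (simp add: flipw_def fun_eq_iff)

lemma is_dpath_rev: "is_dpath V (flipw w) (rev xs) \<longleftrightarrow> is_dpath V w xs"
proof -
  let ?n = "length xs"
  have "(\<forall>i. Suc i < ?n \<longrightarrow> flipw w (rev xs ! i) (rev xs ! Suc i) \<noteq> 0)
      \<longleftrightarrow> (\<forall>j. Suc j < ?n \<longrightarrow> w (xs ! j) (xs ! Suc j) \<noteq> 0)" (is "?L \<longleftrightarrow> ?R")
  proof
    assume L: ?L
    show ?R
    proof (intro allI impI)
      fix j assume j: "Suc j < ?n"
      define i where "i = ?n - Suc (Suc j)"
      have "Suc i < ?n" using j by (simp add: i_def)
      then have "flipw w (rev xs ! i) (rev xs ! Suc i) \<noteq> 0" using L by blast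
      moreover have "rev xs ! i = xs ! Suc j" "rev xs ! Suc i = xs ! j"
        using j by (simp_all add: rev_nth i_def Suc_diff_Suc)
      ultimately show "w (xs ! j) (xs ! Suc j) \<noteq> 0" by (simp add: flipw_def)
    qed
  next
    assume R: ?R
    show ?L
    proof (intro allI impI)
      fix i assume i: "Suc i < ?n"
      define j where "j = ?n - Suc (Suc i)"
      have "Suc j < ?n" using i by (simp add: j_def)
      then have "w (xs ! j) (xs ! Suc j) \<noteq> 0" using R by blast
      moreover have "rev xs ! i = xs ! Suc j" "rev xs ! Suc i = xs ! j"
        using i by (simp_all add: rev_nth j_def Suc_diff_Suc)
      ultimately show "flipw w (rev xs ! i) (rev xs ! Suc i) \<noteq> 0" by (simp add: flipw_def)
    qed
  qed
  then show ?thesis by (simp add: is_dpath_def)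
qed

lemma path_weight_rev: "path_weight (flipw w) (rev xs) = path_weight w xs"
proof -
  let ?n = "length xs"
  let ?g = "\<lambda>j. w (xs ! j) (xs ! Suc j)"
  have "path_weight (flipw w) (rev xs) = (\<Prod>i<?n - 1. ?g (?n - 1 - Suc i))"
    unfolding path_weight_def
  proof (rule prod.cong, simp)
    fix i assume "i \<in> {..<?n - 1}"
    then have i: "Suc i < ?n" by simp
    have "rev xs ! i = xs ! Suc (?n - 1 - Suc i)" "rev xs ! Suc i = xs ! (?n - 1 - Suc i)"
      using i by (simp_all add: rev_nth Suc_diff_Suc)
    then show "flipw w (rev xs ! i) (rev xs ! Suc i) = ?g (?n - 1 - Suc i)" by (simp add: flipw_def)
  qed
  also have "\<dots> = (\<Prod>i<?n - 1. ?g i)" by (rule prod.nat_diff_reindex)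
  finally show ?thesis by (simp add: path_weight_def)
qed

lemma te_flip: "total_effect V (flipw w) b a = total_effect V w a b"
  unfolding te_paths
proof (rule sum.reindex_bij_witness[where i = rev and j = rev])
  fix xs assume "xs \<in> paths V w a b"
  then show "rev xs \<in> paths V (flipw w) b a"
    using is_dpath_rev[of V w xs] by (auto simp: paths_def is_dpath_def hd_rev last_rev)
next
  fix xs assume "xs \<in> paths V (flipw w) b a"
  then show "rev xs \<in> paths V w a b"
    using is_dpath_rev[of V w "rev xs"] by (auto simp: paths_def is_dpath_def hd_rev last_rev)
next
  fix xs show "path_weight w (rev xs) = path_weight (flipw w) xs"
    using path_weight_rev[of "flipw w" xs] by (simp add: flipw_flipw)
qed (auto simp: path_weight_rev)

lemma wedges_flip: "wedges V (flipw w) = (wedges V w)\<inverse>"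
  by (auto simp: wedges_def flipw_def)

lemma te_last:
  assumes fin: "finite V" and ac: "acyclic (wedges V w)" and b: "b \<in> V" and ab: "a \<noteq> b"
  shows "total_effect V w a b = (\<Sum>m\<in>V. total_effect V w a m * w m b)"
proof -
  have ac': "acyclic (wedges V (flipw w))" using ac by (simp add: wedges_flip acyclic_converse)
  have "total_effect V w a b = total_effect V (flipw w) b a" by (simp add: te_flip)
  also have "\<dots> = (\<Sum>m\<in>V. flipw w b m * total_effect V (flipw w) m a)"
    using te_first[OF fin ac' b] ab by simp
  also have "\<dots> = (\<Sum>m\<in>V. total_effect V w a m * w m b)"
    by (simp add: te_flip flipw_def mult.commute)
  finally show ?thesis .
qed

lemma finite_wedges: "finite V \<Longrightarrow> finite (wedges V w)"
  by (rule finite_subset[of _ "V \<times> V"]) (auto simp: wedges_def)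

lemma te_trans_faithful:
  assumes f: "faithful_a V w" and ab: "total_effect V w a b \<noteq> 0" and bc: "total_effect V w b c \<noteq> 0"
  shows "total_effect V w a c \<noteq> 0"
proof -
  have V: "a \<in> V" "c \<in> V" using te_nz_V(1)[OF ab] te_nz_V(2)[OF bc] by auto
  show ?thesis
  proof (cases "a = c")
    case True then show ?thesis using te_self[OF V(1), of w] by simp
  next
    case False
    show ?thesis
    proof (cases "a = b \<or> b = c")
      case True then show ?thesis using ab bc by auto
    next
      case False
      then have "(a, b) \<in> (wedges V w)\<^sup>+" "(b, c) \<in> (wedges V w)\<^sup>+" using te_trancl ab bc by auto
      then have "(a, c) \<in> (wedges V w)\<^sup>+" by simp
      then show ?thesis using f by (simp add: faithful_a_def)
    qed
  qed
qed

lemma faithful_from_trans: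
  assumes fin: "finite V" and ac: "acyclic (wedges V w)"
    and tr: "\<And>a m b. total_effect V w a m \<noteq> 0 \<Longrightarrow> total_effect V w m b \<noteq> 0 \<Longrightarrow> total_effect V w a b \<noteq> 0"
  shows "faithful_a V w"
proof -
  let ?E = "wedges V w"
  let ?T = "total_effect V w"
  have wf: "wf (?E\<^sup>+)" using finite_acyclic_wf[OF finite_wedges[OF fin] ac] by (rule wf_trancl)
  have edge: "\<forall>a. (a, b) \<in> ?E \<longrightarrow> ?T a b \<noteq> 0" for b
  proof (rule wf_induct[OF wf, of _ b])
    fix b assume less: "\<forall>y. (y, b) \<in> ?E\<^sup>+ \<longrightarrow> (\<forall>a. (a, y) \<in> ?E \<longrightarrow> ?T a y \<noteq> 0)"
    show "\<forall>a. (a, b) \<in> ?E \<longrightarrow> ?T a b \<noteq> 0"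
    proof (intro allI impI)
      fix a assume e: "(a, b) \<in> ?E"
      then have abV: "a \<in> V" "b \<in> V" "w a b \<noteq> 0" by (auto simp: wedges_def)
      have "a \<noteq> b" using e ac by (auto simp: acyclic_def)
      show "?T a b \<noteq> 0"
      proof
        assume z: "?T a b = 0"
        have "?T a b = (\<Sum>m\<in>V. w a m * ?T m b)" using te_first[OF fin ac abV(1) \<open>a \<noteq> b\<close>] .
        also have "\<dots> = w a b * ?T b b + (\<Sum>m\<in>V - {b}. w a m * ?T m b)"
          using abV(2) fin by (simp add: sum.remove)
        finally have "(\<Sum>m\<in>V - {b}. w a m * ?T m b) \<noteq> 0"
          using z abV te_self[OF abV(2), of w] by simp
        then obtain m where m: "m \<in> V - {b}" "w a m * ?T m b \<noteq> 0" by (meson sum.neutral)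
        have mnz: "w a m \<noteq> 0" "?T m b \<noteq> 0" using m(2) by auto
        have "m \<noteq> b" using m(1) by simp
        have mb: "(m, b) \<in> ?E\<^sup>+" using te_trancl[OF mnz(2) \<open>m \<noteq> b\<close>] .
        have "(a, m) \<in> ?E" using m abV by (auto simp: wedges_def)
        then have "?T a m \<noteq> 0" using less[rule_format, OF mb] by blast
        then have "?T a b \<noteq> 0" using tr mnz(2) by blast
        then show False using z by simp
      qed
    qed
  qed
  show ?thesis unfolding faithful_a_def
  proof (intro allI impI)
    fix a b assume "(a, b) \<in> ?E\<^sup>+"
    then show "?T a b \<noteq> 0"
    proof (induction rule: trancl_induct)
      case (base y) then show ?case using edge by blast
    next
      case (step y z)
      have "?T y z \<noteq> 0" using edge step(2) by blast
      then show ?case using tr[OF step(3)] by blast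
    qed
  qed
qed


lemma meE_iff: "(u, v) \<in> wedges {..<p} (me_w c) \<longleftrightarrow> u < p \<and> v < p \<and> c v u \<noteq> 0"
  by (simp add: wedges_def me_w_def)

lemma u_leaf_lt: "sem_me p Z c \<Longrightarrow> u_leaf p Z c j \<Longrightarrow> j < p"
  by (auto simp: sem_me_def u_leaf_def)

lemma nu_iff: "j \<in> nu_leaves p Z c \<longleftrightarrow> j < p \<and> \<not> u_leaf p Z c j"
  by (simp add: nu_leaves_def)

lemma edge_nu: "(x, y) \<in> wedges {..<p} (me_w c) \<Longrightarrow> x \<in> nu_leaves p Z c"
  by (auto simp: meE_iff nu_iff u_leaf_def me_children_def)

lemma trancl_nu: "(x, y) \<in> (wedges {..<p} (me_w c))\<^sup>+ \<Longrightarrow> x \<in> nu_leaves p Z c"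
  by (erule converse_tranclE) (auto intro: edge_nu)

lemma te_nu: "total_effect {..<p} (me_w c) x y \<noteq> 0 \<Longrightarrow> x \<noteq> y \<Longrightarrow> x \<in> nu_leaves p Z c"
  using te_trancl trancl_nu by metis

locale me_pair =
  fixes p :: nat and Z :: "nat set" and c c' :: "nat \<Rightarrow> nat \<Rightarrow> real" and \<sigma> :: "nat \<Rightarrow> nat" and l :: "nat \<Rightarrow> real"
  assumes sem: "sem_me p Z c" and sem': "sem_me p Z c'" and faith: "me_faithful p c"
    and bij: "bij_betw \<sigma> (nu_leaves p Z c) (nu_leaves p Z c')"
    and lnz: "\<And>j. j \<in> nu_leaves p Z c \<Longrightarrow> l j \<noteq> 0"
    and mix: "\<And>j v. j \<in> nu_leaves p Z c \<Longrightarrow>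
       total_effect {..<p} (me_w c') (\<sigma> j) v = l j * total_effect {..<p} (me_w c) j v"
begin

abbreviation "T \<equiv> total_effect {..<p} (me_w c)"
abbreviation "T' \<equiv> total_effect {..<p} (me_w c')"
abbreviation "N \<equiv> nu_leaves p Z c"
abbreviation "N' \<equiv> nu_leaves p Z c'"
abbreviation "E \<equiv> wedges {..<p} (me_w c)"
abbreviation "E' \<equiv> wedges {..<p} (me_w c')"

lemma ac: "acyclic E" using sem by (simp add: sem_me_def)
lemma ac': "acyclic E'" using sem' by (simp add: sem_me_def)
lemma fa: "faithful_a {..<p} (me_w c)" using faith by (simp add: me_faithful_def)

lemma img: "\<sigma> ` N = N'" using bij by (simp add: bij_betw_def)
lemma inj: "inj_on \<sigma> N" using bij by (simp add: bij_betw_def)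

lemma sig_in: "j \<in> N \<Longrightarrow> \<sigma> j \<in> N'" using img by blast

lemma preimg: "x \<in> N' \<Longrightarrow> \<exists>k\<in>N. \<sigma> k = x" using img by (metis imageE)

lemma lt: "j \<in> N \<Longrightarrow> j < p" "x \<in> N' \<Longrightarrow> x < p" by (auto simp: nu_iff)

lemma M2: assumes "j \<in> N" shows "T j (\<sigma> j) \<noteq> 0"
proof -
  have "T' (\<sigma> j) (\<sigma> j) = 1" using te_self[of "\<sigma> j" "{..<p}"] lt(2)[OF sig_in[OF assms]] by simp
  then show ?thesis using mix[OF assms, of "\<sigma> j"] by auto
qed

lemma M2b: assumes "j \<in> N" shows "T' (\<sigma> j) j \<noteq> 0"
  using mix[OF assms, of j] te_self[of j "{..<p}"] lt(1)[OF assms] lnz[OF assms] by simp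

lemma trans: "T a b \<noteq> 0 \<Longrightarrow> T b d \<noteq> 0 \<Longrightarrow> T a d \<noteq> 0"
  using te_trans_faithful[OF fa] by blast

lemma nocyc': "(x, x) \<notin> E'\<^sup>+" using ac' by (simp add: acyclic_def)

lemma M3: assumes j: "j \<in> N" and ne: "\<sigma> j \<noteq> j" shows "j \<notin> N'"
proof
  assume "j \<in> N'"
  then obtain \<nu> where nu: "\<nu> \<in> N" "\<sigma> \<nu> = j" using preimg by blast
  have "T \<nu> j \<noteq> 0" using M2[OF nu(1)] nu(2) by simp
  then have "T \<nu> (\<sigma> j) \<noteq> 0" using trans M2[OF j] by blast
  then have "T' j (\<sigma> j) \<noteq> 0" using mix[OF nu(1), of "\<sigma> j"] nu lnz by simp
  then have "(j, \<sigma> j) \<in> E'\<^sup>+" using te_trancl ne by metis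
  moreover have "(\<sigma> j, j) \<in> E'\<^sup>+" using te_trancl M2b[OF j] ne by metis
  ultimately show False using nocyc' by (meson trancl_trans)
qed

lemma M4: assumes j: "j \<in> N" and ne: "\<sigma> j \<noteq> j"
  shows "u_leaf p Z c' j" "me_aog_parent p c' j (\<sigma> j)"
proof -
  define r where "r = \<sigma> j"
  have jp: "j < p" using lt j by blast
  have rN: "r \<in> N'" using sig_in j r_def by blast
  have rp: "r < p" using lt rN by blast
  show "u_leaf p Z c' j" using M3[OF j ne] jp by (simp add: nu_iff)
  have rj: "(r, j) \<in> E'\<^sup>+" using te_trancl M2b[OF j] ne r_def by metis
  have par: "(z, r) \<in> E'\<^sup>+" if zj: "(z, j) \<in> E'" and zr: "z \<noteq> r" for z
  proof -
    have zp: "z < p" and wz: "me_w c' z j \<noteq> 0" using zj by (auto simp: wedges_def)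
    have "z \<noteq> j" using zj nocyc' by blast
    obtain x where x: "x = z \<or> (z, x) \<in> E'" "x \<noteq> j" "T' x j \<noteq> 0"
    proof (cases "T' z j = 0")
      case False then show ?thesis using that \<open>z \<noteq> j\<close> by blast
    next
      case True
      have "T' z j = (\<Sum>m\<in>{..<p}. me_w c' z m * T' m j)"
        using te_first[OF _ ac'] zp \<open>z \<noteq> j\<close> by simp
      also have "\<dots> = me_w c' z j * T' j j + (\<Sum>m\<in>{..<p} - {j}. me_w c' z m * T' m j)"
        using jp by (simp add: sum.remove)
      finally have "(\<Sum>m\<in>{..<p} - {j}. me_w c' z m * T' m j) \<noteq> 0"
        using True wz te_self[of j "{..<p}" "me_w c'"] jp by simp
      then obtain m where m: "m \<in> {..<p} - {j}" "me_w c' z m * T' m j \<noteq> 0" by (meson sum.neutral)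
      then have "(z, m) \<in> E'" using zp by (auto simp: wedges_def)
      then show ?thesis using that m by auto
    qed
    have "x \<in> N'" using te_nu x(2,3) by metis
    then obtain k where k: "k \<in> N" "\<sigma> k = x" using preimg by blast
    have "T k j \<noteq> 0" using mix[OF k(1), of j] x(3) k(2) by simp
    then have "T k r \<noteq> 0" using trans M2[OF j] r_def by blast
    then have xr: "T' x r \<noteq> 0" using mix[OF k(1), of r] k lnz by simp
    show ?thesis
    proof (cases "x = r")
      case True
      then have "(z, r) \<in> E'" using x(1) zr by blast
      then show ?thesis by blast
    next
      case False
      then have "(x, r) \<in> E'\<^sup>+" using te_trancl xr by metis
      then show ?thesis using x(1) by (meson trancl_into_trancl2)
    qed
  qed
  have redge: "(r, j) \<in> E'"
    using rj
  proof (cases rule: tranclE)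
    case (step z)
    show ?thesis
    proof (cases "z = r")
      case True then show ?thesis using step nocyc' by blast
    next
      case False
      then have "(z, r) \<in> E'\<^sup>+" using par step(2) by blast
      then show ?thesis using step(1) nocyc' by (meson trancl_trans)
    qed
  qed simp
  show "me_aog_parent p c' j (\<sigma> j)"
    unfolding me_aog_parent_def r_def[symmetric]
  proof
    show "r \<in> me_parents p c' j" using redge by (simp add: me_parents_def meE_iff)
    show "\<forall>k\<in>me_parents p c' j. k \<noteq> r \<longrightarrow> me_anc p c' k r"
    proof (intro ballI impI)
      fix k assume "k \<in> me_parents p c' j" "k \<noteq> r"
      then have "(k, j) \<in> E'" using jp by (simp add: me_parents_def meE_iff)
      then show "me_anc p c' k r" using par \<open>k \<noteq> r\<close> by (simp add: me_anc_def)
    qed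
  qed
qed

lemma grp_in_aog: "i \<in> nu_leaves p Z d \<Longrightarrow>
   insert i {x. u_leaf p Z d x \<and> me_aog_parent p d x i} \<in> me_aog p Z d"
  by (auto simp: me_aog_def)

lemma M5: assumes aog: "me_aog p Z c' = me_aog p Z c" and j: "j \<in> N" and ne: "\<sigma> j \<noteq> j"
  shows "u_leaf p Z c (\<sigma> j)" "me_aog_parent p c (\<sigma> j) j"
proof -
  define r where "r = \<sigma> j"
  define G where "G = insert r {x. u_leaf p Z c' x \<and> me_aog_parent p c' x r}"
  have "G \<in> me_aog p Z c'" unfolding G_def using grp_in_aog sig_in[OF j] r_def by blast
  then have G: "G \<in> me_aog p Z c" using aog by simp
  have jG: "j \<in> G" "r \<in> G" using M4[OF j ne] by (auto simp: G_def r_def)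
  have "j \<noteq> r" using ne r_def by simp
  have jnu: "\<not> u_leaf p Z c j" using j by (simp add: nu_iff)
  from G consider (g) i where "G = insert i {x. u_leaf p Z c x \<and> me_aog_parent p c x i}" "i \<in> N"
    | (s) x where "G = {x}"
    unfolding me_aog_def by blast
  then have "u_leaf p Z c r \<and> me_aog_parent p c r j"
  proof cases
    case (g i)
    then have "i = j" using jG(1) jnu by auto
    then show ?thesis using g jG(2) \<open>j \<noteq> r\<close> by auto
  next
    case (s x) then show ?thesis using jG \<open>j \<noteq> r\<close> by auto
  qed
  then show "u_leaf p Z c (\<sigma> j)" "me_aog_parent p c (\<sigma> j) j" by (auto simp: r_def)
qed

lemma M6: assumes aog: "me_aog p Z c' = me_aog p Z c" and a: "\<alpha> \<in> N" and m: "\<mu> \<in> N"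
  and nz: "T \<alpha> (\<sigma> \<mu>) \<noteq> 0" shows "T \<alpha> \<mu> \<noteq> 0"
proof (cases "\<sigma> \<mu> = \<mu>")
  case True then show ?thesis using nz by simp
next
  case False
  note u = M5[OF aog m False]
  have "\<alpha> \<noteq> \<sigma> \<mu>" using u(1) a by (auto simp: nu_iff)
  then have tr: "(\<alpha>, \<sigma> \<mu>) \<in> E\<^sup>+" using te_trancl nz by metis
  have par: "k = \<mu> \<or> (k, \<mu>) \<in> E\<^sup>+" if "(k, \<sigma> \<mu>) \<in> E" for k
    using u(2) that by (auto simp: me_aog_parent_def me_parents_def me_anc_def meE_iff)
  have "\<alpha> = \<mu> \<or> (\<alpha>, \<mu>) \<in> E\<^sup>+"
    using tr
  proof (cases rule: tranclE)
    case base then show ?thesis using par by blast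
  next
    case (step k)
    then show ?thesis using par[OF step(2)] by (meson trancl_trans)
  qed
  then show ?thesis
  proof
    assume "\<alpha> = \<mu>" then show ?thesis using te_self[of \<mu> "{..<p}"] lt(1)[OF m] by simp
  next
    assume "(\<alpha>, \<mu>) \<in> E\<^sup>+" then show ?thesis using fa by (simp add: faithful_a_def)
  qed
qed

lemma M7: assumes aog: "me_aog p Z c' = me_aog p Z c"
  and am: "T' a m \<noteq> 0" and mb: "T' m b \<noteq> 0" shows "T' a b \<noteq> 0"
proof (cases "a = m \<or> m = b")
  case True then show ?thesis using am mb by auto
next
  case False
  have "a \<in> N'" "m \<in> N'" using te_nu am mb False by metis+
  then obtain \<alpha> \<mu> where al: "\<alpha> \<in> N" "\<sigma> \<alpha> = a" and mu: "\<mu> \<in> N" "\<sigma> \<mu> = m"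
    using preimg by metis
  have "T \<alpha> (\<sigma> \<mu>) \<noteq> 0" using am mix[OF al(1), of m] al mu by simp
  then have 1: "T \<alpha> \<mu> \<noteq> 0" using M6[OF aog al(1) mu(1)] by blast
  have 2: "T \<mu> b \<noteq> 0" using mb mix[OF mu(1), of b] mu by simp
  have "T \<alpha> b \<noteq> 0" using trans[OF 1 2] .
  then show ?thesis using mix[OF al(1), of b] al lnz by simp
qed

lemma part1: assumes aog: "me_aog p Z c' = me_aog p Z c" shows "me_faithful p c'"
  unfolding me_faithful_def
  by (rule faithful_from_trans[OF _ ac']) (use M7[OF aog] in auto)

end

definition Qs :: "nat \<Rightarrow> nat set \<Rightarrow> (nat \<Rightarrow> nat \<Rightarrow> real) \<Rightarrow> nat \<Rightarrow> nat set" where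
  "Qs p Z c v = {k \<in> nu_leaves p Z c. total_effect {..<p} (me_w c) k v \<noteq> 0}"

context
  fixes p Z c assumes sem: "sem_me p Z c" and faith: "me_faithful p c"
begin

private lemma fa1: "faithful_a {..<p} (me_w c)" using faith by (simp add: me_faithful_def)
private lemma ac1: "acyclic (wedges {..<p} (me_w c))" using sem by (simp add: sem_me_def)

lemma Q_uleaf: assumes "u_leaf p Z c x"
  shows "Qs p Z c x = {k. (k, x) \<in> (wedges {..<p} (me_w c))\<^sup>+}"
proof -
  have "x \<notin> nu_leaves p Z c" using assms by (simp add: nu_iff)
  then show ?thesis using fa1 unfolding Qs_def faithful_a_def
    by (auto intro: te_trancl trancl_nu)
qed

lemma Q_nu: assumes "i \<in> nu_leaves p Z c"
  shows "Qs p Z c i = {k. k = i \<or> (k, i) \<in> (wedges {..<p} (me_w c))\<^sup>+}"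
proof -
  have "i < p" using assms by (simp add: nu_iff)
  then show ?thesis using fa1 assms te_self[of i "{..<p}" "me_w c"] unfolding Qs_def faithful_a_def
    by (auto intro: te_trancl trancl_nu)
qed

lemma Q_inj: assumes "i \<in> nu_leaves p Z c" "v \<in> nu_leaves p Z c" "Qs p Z c v = Qs p Z c i"
  shows "v = i"
proof (rule ccontr)
  assume ne: "v \<noteq> i"
  have "i \<in> Qs p Z c v" using assms(3) Q_nu[OF assms(1)] by auto
  then have 1: "(i, v) \<in> (wedges {..<p} (me_w c))\<^sup>+" using Q_nu[OF assms(2)] ne by auto
  have "v \<in> Qs p Z c i" using assms(3) Q_nu[OF assms(2)] by auto
  then have 2: "(v, i) \<in> (wedges {..<p} (me_w c))\<^sup>+" using Q_nu[OF assms(1)] ne by auto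
  from 1 2 show False using ac1 by (meson acyclic_def trancl_trans)
qed

lemma aog_parent_nu: "me_aog_parent p c x i \<Longrightarrow> x < p \<Longrightarrow> i \<in> nu_leaves p Z c"
  by (auto simp: me_aog_parent_def me_parents_def intro!: edge_nu[of i x p c] simp: meE_iff)

lemma aog_iff: assumes x: "u_leaf p Z c x" and i: "i \<in> nu_leaves p Z c"
  shows "me_aog_parent p c x i \<longleftrightarrow> Qs p Z c x = Qs p Z c i"
proof -
  let ?E = "wedges {..<p} (me_w c)"
  have xp: "x < p" using u_leaf_lt[OF sem x] .
  have ip: "i < p" using i by (simp add: nu_iff)
  show ?thesis
  proof
    assume ap: "me_aog_parent p c x i"
    have ix: "(i, x) \<in> ?E" using ap xp by (auto simp: me_aog_parent_def me_parents_def meE_iff)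
    have par: "k = i \<or> (k, i) \<in> ?E\<^sup>+" if "(k, x) \<in> ?E" for k
      using ap that by (auto simp: me_aog_parent_def me_parents_def me_anc_def meE_iff)
    have "{k. (k, x) \<in> ?E\<^sup>+} = {k. k = i \<or> (k, i) \<in> ?E\<^sup>+}"
    proof (intro equalityI subsetI)
      fix k assume "k \<in> {k. (k, x) \<in> ?E\<^sup>+}"
      then have "(k, x) \<in> ?E\<^sup>+" by simp
      then show "k \<in> {k. k = i \<or> (k, i) \<in> ?E\<^sup>+}"
      proof (cases rule: tranclE)
        case base then show ?thesis using par by blast
      next
        case (step z) then show ?thesis using par[OF step(2)] by (auto intro: trancl_trans)
      qed
    next
      fix k assume "k \<in> {k. k = i \<or> (k, i) \<in> ?E\<^sup>+}"
      then show "k \<in> {k. (k, x) \<in> ?E\<^sup>+}" using ix by auto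
    qed
    then show "Qs p Z c x = Qs p Z c i" using Q_uleaf[OF x] Q_nu[OF i] by simp
  next
    assume eq: "Qs p Z c x = Qs p Z c i"
    then have eq2: "(k, x) \<in> ?E\<^sup>+ \<longleftrightarrow> k = i \<or> (k, i) \<in> ?E\<^sup>+" for k
      using Q_uleaf[OF x] Q_nu[OF i] by blast
    have nc: "(y, y) \<notin> ?E\<^sup>+" for y using ac1 by (simp add: acyclic_def)
    have "(i, x) \<in> ?E\<^sup>+" using eq2 by blast
    then have ix: "(i, x) \<in> ?E"
    proof (cases rule: tranclE)
      case (step z)
      have "z = i \<or> (z, i) \<in> ?E\<^sup>+" using eq2 step(2) by blast
      then show ?thesis using step(1) nc by (meson trancl_trans)
    qed simp
    show "me_aog_parent p c x i" unfolding me_aog_parent_def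
    proof
      show "i \<in> me_parents p c x" using ix by (simp add: me_parents_def meE_iff)
      show "\<forall>k\<in>me_parents p c x. k \<noteq> i \<longrightarrow> me_anc p c k i"
      proof (intro ballI impI)
        fix k assume "k \<in> me_parents p c x" "k \<noteq> i"
        then have "(k, x) \<in> ?E\<^sup>+" using xp by (auto simp: me_parents_def meE_iff)
        then show "me_anc p c k i" using eq2 \<open>k \<noteq> i\<close> by (simp add: me_anc_def)
      qed
    qed
  qed
qed

lemma aog_char: "me_aog p Z c = (\<lambda>i. {v. v < p \<and> Qs p Z c v = Qs p Z c i}) ` nu_leaves p Z c
   \<union> (\<lambda>x. {x}) ` {x. x < p \<and> x \<notin> nu_leaves p Z c \<and> (\<forall>i\<in>nu_leaves p Z c. Qs p Z c x \<noteq> Qs p Z c i)}"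
proof -
  have grp: "insert i {x. u_leaf p Z c x \<and> me_aog_parent p c x i} = {v. v < p \<and> Qs p Z c v = Qs p Z c i}"
    if i: "i \<in> nu_leaves p Z c" for i
  proof (intro equalityI subsetI)
    fix v assume "v \<in> insert i {x. u_leaf p Z c x \<and> me_aog_parent p c x i}"
    then show "v \<in> {v. v < p \<and> Qs p Z c v = Qs p Z c i}"
      using i aog_iff u_leaf_lt[OF sem] by (auto simp: nu_iff)
  next
    fix v assume v: "v \<in> {v. v < p \<and> Qs p Z c v = Qs p Z c i}"
    show "v \<in> insert i {x. u_leaf p Z c x \<and> me_aog_parent p c x i}"
    proof (cases "v \<in> nu_leaves p Z c")
      case True then show ?thesis using Q_inj[OF i True] v by simp
    next
      case False
      then have "u_leaf p Z c v" using v by (simp add: nu_iff)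
      then show ?thesis using aog_iff[OF _ i] v by simp
    qed
  qed
  have sing: "(u_leaf p Z c x \<and> \<not> (\<exists>i. me_aog_parent p c x i)) \<longleftrightarrow>
      (x < p \<and> x \<notin> nu_leaves p Z c \<and> (\<forall>i\<in>nu_leaves p Z c. Qs p Z c x \<noteq> Qs p Z c i))" for x
  proof
    assume a: "u_leaf p Z c x \<and> \<not> (\<exists>i. me_aog_parent p c x i)"
    have "\<forall>i\<in>nu_leaves p Z c. Qs p Z c x \<noteq> Qs p Z c i"
    proof (intro ballI notI)
      fix i assume "i \<in> nu_leaves p Z c" "Qs p Z c x = Qs p Z c i"
      then have "me_aog_parent p c x i" using aog_iff a by blast
      then show False using a by blast
    qed
    then show "x < p \<and> x \<notin> nu_leaves p Z c \<and> (\<forall>i\<in>nu_leaves p Z c. Qs p Z c x \<noteq> Qs p Z c i)"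
      using a u_leaf_lt[OF sem] by (auto simp: nu_iff)
  next
    assume a: "x < p \<and> x \<notin> nu_leaves p Z c \<and> (\<forall>i\<in>nu_leaves p Z c. Qs p Z c x \<noteq> Qs p Z c i)"
    then have u: "u_leaf p Z c x" by (simp add: nu_iff)
    then show "u_leaf p Z c x \<and> \<not> (\<exists>i. me_aog_parent p c x i)"
      using a aog_iff aog_parent_nu by blast
  qed
  show ?thesis unfolding me_aog_def using grp sing by (auto simp: image_def)
qed

end

context me_pair begin

lemma Qmap: "Qs p Z c' v = \<sigma> ` Qs p Z c v"
proof (intro equalityI subsetI)
  fix x assume "x \<in> Qs p Z c' v"
  then have x: "x \<in> N'" "T' x v \<noteq> 0" by (auto simp: Qs_def)
  then obtain k where k: "k \<in> N" "\<sigma> k = x" using preimg by blast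
  then have "T k v \<noteq> 0" using x mix[OF k(1), of v] by simp
  then show "x \<in> \<sigma> ` Qs p Z c v" using k by (auto simp: Qs_def)
next
  fix x assume "x \<in> \<sigma> ` Qs p Z c v"
  then obtain k where k: "k \<in> N" "\<sigma> k = x" "T k v \<noteq> 0" by (auto simp: Qs_def)
  then show "x \<in> Qs p Z c' v" using mix[OF k(1), of v] lnz sig_in by (auto simp: Qs_def)
qed

lemma Qsub: "Qs p Z c v \<subseteq> N" by (auto simp: Qs_def)

lemma part2: assumes faith': "me_faithful p c'" shows "me_aog p Z c' = me_aog p Z c"
proof -
  have fa': "faithful_a {..<p} (me_w c')" using faith' by (simp add: me_faithful_def)
  have Qeq: "Qs p Z c v = Qs p Z c w \<longleftrightarrow> Qs p Z c' v = Qs p Z c' w" for v w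
    unfolding Qmap using inj_on_image_eq_iff[OF inj Qsub Qsub] by simp
  have Qsig: "Qs p Z c (\<sigma> i) = Qs p Z c i" if i: "i \<in> N" for i
  proof
    show "Qs p Z c i \<subseteq> Qs p Z c (\<sigma> i)"
      using trans M2[OF i] by (auto simp: Qs_def)
    have "Qs p Z c' (\<sigma> i) \<subseteq> Qs p Z c' i"
      using te_trans_faithful[OF fa'] M2b[OF i] by (auto simp: Qs_def)
    then show "Qs p Z c (\<sigma> i) \<subseteq> Qs p Z c i"
      unfolding Qmap using inj_on_image_subset_iff[OF inj Qsub Qsub] by simp
  qed
  have A: "(\<lambda>i. {v. v < p \<and> Qs p Z c' v = Qs p Z c' i}) ` N' = (\<lambda>i. {v. v < p \<and> Qs p Z c v = Qs p Z c i}) ` N"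
  proof -
    have "(\<lambda>i. {v. v < p \<and> Qs p Z c' v = Qs p Z c' i}) ` N' = (\<lambda>i. {v. v < p \<and> Qs p Z c' v = Qs p Z c' i}) ` (\<sigma> ` N)"
      using img by simp
    also have "\<dots> = (\<lambda>i. {v. v < p \<and> Qs p Z c' v = Qs p Z c' (\<sigma> i)}) ` N"
      by (simp add: image_image)
    also have "\<dots> = (\<lambda>i. {v. v < p \<and> Qs p Z c v = Qs p Z c i}) ` N"
      using Qeq Qsig by (intro image_cong) auto
    finally show ?thesis .
  qed
  have B: "{x. x < p \<and> x \<notin> N' \<and> (\<forall>i\<in>N'. Qs p Z c' x \<noteq> Qs p Z c' i)}
     = {x. x < p \<and> x \<notin> N \<and> (\<forall>i\<in>N. Qs p Z c x \<noteq> Qs p Z c i)}"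
  proof -
    have "(\<forall>i\<in>N'. Qs p Z c' x \<noteq> Qs p Z c' i) \<longleftrightarrow> (\<forall>i\<in>N. Qs p Z c x \<noteq> Qs p Z c i)" for x
    proof -
      have "(\<forall>i\<in>N'. Qs p Z c' x \<noteq> Qs p Z c' i) \<longleftrightarrow> (\<forall>i\<in>N. Qs p Z c' x \<noteq> Qs p Z c' (\<sigma> i))"
        using img[symmetric] by simp
      also have "\<dots> \<longleftrightarrow> (\<forall>i\<in>N. Qs p Z c x \<noteq> Qs p Z c (\<sigma> i))" using Qeq by blast
      also have "\<dots> \<longleftrightarrow> (\<forall>i\<in>N. Qs p Z c x \<noteq> Qs p Z c i)" using Qsig by auto
      finally show ?thesis .
    qed
    moreover have "x \<notin> N'" if "\<forall>i\<in>N. Qs p Z c x \<noteq> Qs p Z c i" for x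
      using that preimg Qsig by metis
    moreover have "x \<notin> N" if "\<forall>i\<in>N. Qs p Z c x \<noteq> Qs p Z c i" for x
      using that by blast
    ultimately show ?thesis by blast
  qed
  show ?thesis using aog_char[OF sem faith] aog_char[OF sem' faith'] A B by simp
qed

end

lemma equiv_pair:
  assumes "sem_me p Z c" "sem_me p Z c'" "me_faithful p c" "me_mix_equiv p Z c c'"
  shows "\<exists>\<sigma> l. me_pair p Z c c' \<sigma> l"
proof -
  obtain \<sigma> l where b: "bij_betw \<sigma> (nu_leaves p Z c) (nu_leaves p Z c')"
    and l: "\<forall>j \<in> nu_leaves p Z c. l j \<noteq> 0"
    and m: "\<forall>v < p. \<forall>j \<in> nu_leaves p Z c. me_mix p c' v (\<sigma> j) = l j * me_mix p c v j"
    using assms(4) unfolding me_mix_equiv_def by blast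
  have "total_effect {..<p} (me_w c') (\<sigma> j) v = l j * total_effect {..<p} (me_w c) j v"
    if j: "j \<in> nu_leaves p Z c" for j v
  proof (cases "v < p")
    case True then show ?thesis using m j by (simp add: me_mix_def)
  next
    case False
    then have "total_effect {..<p} (me_w c') (\<sigma> j) v = 0" "total_effect {..<p} (me_w c) j v = 0"
      using te_nz_V(2) by fastforce+
    then show ?thesis by simp
  qed
  then have "me_pair p Z c c' \<sigma> l" using assms b l by unfold_locales auto
  then show ?thesis by blast
qed

theorem ME_main:
  assumes sem: "sem_me p Z c" and faith: "me_faithful p c"
  shows "(\<forall>c' \<in> me_aog_class p Z c. me_faithful p c') \<and>
              (\<forall>c'. sem_me p Z c' \<and> me_mix_equiv p Z c c' \<and> me_faithful p c'
                     \<longrightarrow> c' \<in> me_aog_class p Z c) \<and>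
              {c'. sem_me p Z c' \<and> me_mix_equiv p Z c c' \<and> me_faithful p c'} = me_aog_class p Z c"
proof -
  have P1: "me_faithful p c'" if a: "c' \<in> me_aog_class p Z c" for c'
  proof -
    have c': "sem_me p Z c'" "me_mix_equiv p Z c c'" "me_aog p Z c' = me_aog p Z c"
      using a by (auto simp: me_aog_class_def)
    obtain \<sigma> l where "me_pair p Z c c' \<sigma> l" using equiv_pair[OF sem c'(1) faith c'(2)] by blast
    then show ?thesis using me_pair.part1 c'(3) by blast
  qed
  have P2: "c' \<in> me_aog_class p Z c"
    if a: "sem_me p Z c'" "me_mix_equiv p Z c c'" "me_faithful p c'" for c'
  proof -
    obtain \<sigma> l where "me_pair p Z c c' \<sigma> l" using equiv_pair[OF sem a(1) faith a(2)] by blast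
    then have "me_aog p Z c' = me_aog p Z c" using me_pair.part2 a(3) by blast
    then show ?thesis using a by (simp add: me_aog_class_def)
  qed
  show ?thesis
  proof (intro conjI)
    show "\<forall>c' \<in> me_aog_class p Z c. me_faithful p c'" using P1 by blast
    show "\<forall>c'. sem_me p Z c' \<and> me_mix_equiv p Z c c' \<and> me_faithful p c' \<longrightarrow> c' \<in> me_aog_class p Z c"
      using P2 by blast
    show "{c'. sem_me p Z c' \<and> me_mix_equiv p Z c c' \<and> me_faithful p c'} = me_aog_class p Z c"
      using P1 P2 by (auto simp: me_aog_class_def)
  qed
qed


lemma ur_w_simps[simp]:
  "ur_w A B (Inl h) (Inr j) = B $ j $ h"
  "ur_w A B (Inr k) (Inr j) = A $ j $ k"
  "ur_w A B u (Inl h') = 0"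
  by (cases u; simp add: ur_w_def)+

lemma urE_iff: "(u, v) \<in> wedges UNIV (ur_w A B) \<longleftrightarrow> ur_w A B u v \<noteq> 0"
  by (simp add: wedges_def)

lemma ur_edge_cases:
  assumes "(u, v) \<in> wedges UNIV (ur_w A B)"
  obtains h j where "u = Inl h" "v = Inr j" "B $ j $ h \<noteq> 0"
    | k j where "u = Inr k" "v = Inr j" "A $ j $ k \<noteq> 0"
  using assms by (cases u; cases v) (auto simp: urE_iff)

lemma ur_ac:
  fixes A :: "real^'x^'x" and B :: "real^'h^'x"
  assumes "sem_ur A" shows "acyclic (wedges UNIV (ur_w A B))"
proof -
  obtain ord :: "'x \<Rightarrow> nat" where ord: "\<forall>j k. A $ j $ k \<noteq> 0 \<longrightarrow> ord k < ord j"
    using assms by (auto simp: sem_ur_def)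
  define f :: "'h + 'x \<Rightarrow> nat" where "f = case_sum (\<lambda>_. 0) (\<lambda>x. Suc (ord x))"
  have e: "f u < f v" if "(u, v) \<in> wedges UNIV (ur_w A B)" for u v
    using that by (rule ur_edge_cases) (use ord in \<open>auto simp: f_def\<close>)
  have "f u < f v" if "(u, v) \<in> (wedges UNIV (ur_w A B))\<^sup>+" for u v
    using that by (induction rule: trancl_induct) (auto dest: e)
  then show ?thesis by (auto simp: acyclic_def)
qed

lemma ur_noinl:
  assumes "total_effect UNIV (ur_w A B) u (Inl h) \<noteq> 0" shows "u = Inl h"
proof (rule ccontr)
  assume "u \<noteq> Inl h"
  then have "(u, Inl h) \<in> (wedges UNIV (ur_w A B))\<^sup>+" using te_trancl assms by metis
  then show False by (rule tranclE) (auto elim: ur_edge_cases)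
qed

lemma sum_UNIV_sum: "(\<Sum>m\<in>(UNIV :: ('a::finite + 'b::finite) set). f m) = (\<Sum>h\<in>UNIV. f (Inl h)) + (\<Sum>x\<in>UNIV. f (Inr x))"
proof -
  have "(\<Sum>m\<in>(UNIV :: ('a + 'b) set). f m) = (\<Sum>m\<in>Inl ` UNIV \<union> Inr ` UNIV. f m)"
    by (simp add: UNIV_sum[symmetric])
  also have "\<dots> = (\<Sum>m\<in>Inl ` UNIV. f m) + (\<Sum>m\<in>Inr ` UNIV. f m)"
    by (rule sum.union_disjoint) auto
  also have "\<dots> = (\<Sum>h\<in>UNIV. f (Inl h)) + (\<Sum>x\<in>UNIV. f (Inr x))"
    by (simp add: sum.reindex)
  finally show ?thesis .
qed

lemma ur_first_Inr:
  assumes "sem_ur A" "k \<noteq> i"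
  shows "total_effect UNIV (ur_w A B) (Inr k) (Inr i) = (\<Sum>j\<in>UNIV. A $ j $ k * total_effect UNIV (ur_w A B) (Inr j) (Inr i))"
  using te_first[OF _ ur_ac[OF assms(1)], of "Inr k" "Inr i"] assms(2) by (simp add: sum_UNIV_sum)

lemma ur_first_Inl:
  assumes "sem_ur A"
  shows "total_effect UNIV (ur_w A B) (Inl h) (Inr i) = (\<Sum>j\<in>UNIV. B $ j $ h * total_effect UNIV (ur_w A B) (Inr j) (Inr i))"
  using te_first[OF _ ur_ac[OF assms(1)], of "Inl h" "Inr i"] by (simp add: sum_UNIV_sum)

lemma ur_inv:
  fixes A :: "real^'x::finite^'x" and B :: "real^'h::finite^'x"
  assumes sem: "sem_ur A"
  shows "matrix_inv (mat 1 - A) = (\<chi> i k. total_effect UNIV (ur_w A B) (Inr k) (Inr i))"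
proof -
  let ?T = "total_effect UNIV (ur_w A B)"
  define M :: "real^'x^'x" where "M = (\<chi> i k. ?T (Inr k) (Inr i))"
  obtain ord :: "'x \<Rightarrow> nat" where ord: "\<forall>j k. A $ j $ k \<noteq> 0 \<longrightarrow> ord k < ord j"
    using sem by (auto simp: sem_ur_def)
  have ac: "acyclic (wedges UNIV (ur_w A B))" using ur_ac[OF sem] .
  have "M ** (mat 1 - A) = mat 1"
  proof (subst vec_eq_iff, intro allI, subst vec_eq_iff, intro allI)
    fix i k
    have "(M ** (mat 1 - A)) $ i $ k = (\<Sum>j\<in>UNIV. ?T (Inr j) (Inr i) * ((if j = k then 1 else 0) - A $ j $ k))"
      by (simp add: matrix_matrix_mult_def M_def mat_def)
    also have "\<dots> = (\<Sum>j\<in>UNIV. (if j = k then ?T (Inr j) (Inr i) else 0)) - (\<Sum>j\<in>UNIV. A $ j $ k * ?T (Inr j) (Inr i))"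
      by (simp only: right_diff_distrib sum_subtractf[symmetric]) (rule sum.cong, auto)
    also have "\<dots> = ?T (Inr k) (Inr i) - (\<Sum>j\<in>UNIV. A $ j $ k * ?T (Inr j) (Inr i))"
      by simp
    also have "\<dots> = mat 1 $ i $ k"
    proof (cases "k = i")
      case False
      then show ?thesis using ur_first_Inr[OF sem False, of B] by (simp add: mat_def)
    next
      case True
      have z: "A $ j $ i * ?T (Inr j) (Inr i) = 0" for j
      proof (rule ccontr)
        assume "A $ j $ i * ?T (Inr j) (Inr i) \<noteq> 0"
        then have a: "A $ j $ i \<noteq> 0" and t: "?T (Inr j) (Inr i) \<noteq> 0" by auto
        have "j \<noteq> i" using a ord by auto
        then have "(Inr j, Inr i) \<in> (wedges UNIV (ur_w A B))\<^sup>+" using te_trancl t by (metis sum.inject(2))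
        moreover have "(Inr i, Inr j) \<in> wedges UNIV (ur_w A B)" using a by (simp add: urE_iff)
        ultimately show False using ac by (meson acyclic_def trancl_into_trancl2)
      qed
      have "(\<Sum>j\<in>UNIV. A $ j $ i * ?T (Inr j) (Inr i)) = 0"
        by (rule sum.neutral) (use z in blast)
      then have "(\<Sum>j\<in>UNIV. A $ j $ k * ?T (Inr j) (Inr i)) = 0" using True by simp
      then show ?thesis using True te_self[of "Inr i" UNIV "ur_w A B"] by (simp add: mat_def)
    qed
    finally show "(M ** (mat 1 - A)) $ i $ k = mat 1 $ i $ k" .
  qed
  then have L: "M ** (mat 1 - A) = mat 1" and R: "(mat 1 - A) ** M = mat 1"
    using matrix_left_right_inverse by blast+
  have ex: "\<exists>A'. (mat 1 - A) ** A' = mat 1 \<and> A' ** (mat 1 - A) = mat 1" using L R by blast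
  define M2 where "M2 = matrix_inv (mat 1 - A)"
  have M2: "(mat 1 - A) ** M2 = mat 1" "M2 ** (mat 1 - A) = mat 1"
    using someI_ex[OF ex] by (simp_all add: M2_def matrix_inv_def)
  have "M2 = M2 ** ((mat 1 - A) ** M)" using R by (simp add: matrix_mul_rid)
  also have "\<dots> = M" using M2(2) by (simp add: matrix_mul_assoc matrix_mul_lid)
  finally show ?thesis by (simp add: M2_def M_def)
qed

lemma ur_mix_te:
  assumes sem: "sem_ur A"
  shows "ur_mix A B i col = total_effect UNIV (ur_w A B) col (Inr i)"
proof (cases col)
  case (Inr k)
  then show ?thesis using ur_inv[OF sem, of B] by (simp add: ur_mix_def)
next
  case (Inl h)
  then show ?thesis using ur_inv[OF sem, of B] ur_first_Inl[OF sem, where h = h and i = i and B = B]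
    by (simp add: ur_mix_def matrix_matrix_mult_def mult.commute)
qed


definition Qv :: "real^'x^'x \<Rightarrow> real^'h^'x \<Rightarrow> 'h + 'x \<Rightarrow> 'x set" where
  "Qv A B v = {x. total_effect UNIV (ur_w A B) v (Inr x) \<noteq> 0}"

lemma inl_edge: "(Inl h, v) \<in> wedges UNIV (ur_w A B) \<Longrightarrow> \<exists>k. v = Inr k \<and> B $ k $ h \<noteq> 0"
  by (erule ur_edge_cases) auto

context
  fixes A :: "real^'x::finite^'x" and B :: "real^'h::finite^'x"
  assumes sem: "sem_ur A" and faith: "ur_faithful A B"
begin

private lemma fa2: "faithful_a UNIV (ur_w A B)" using faith by (simp add: ur_faithful_def)
private lemma ac2: "acyclic (wedges UNIV (ur_w A B))" using ur_ac[OF sem] .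
private lemma nc2: "(v, v) \<notin> (wedges UNIV (ur_w A B))\<^sup>+" using ac2 by (simp add: acyclic_def)

lemma Qv_inl: "Qv A B (Inl h) = {x. (Inl h, Inr x) \<in> (wedges UNIV (ur_w A B))\<^sup>+}"
  using fa2 unfolding Qv_def faithful_a_def by (auto intro: te_trancl)

lemma Qv_inr: "Qv A B (Inr i) = {x. x = i \<or> (Inr i, Inr x) \<in> (wedges UNIV (ur_w A B))\<^sup>+}"
  using fa2 te_self[of "Inr i" UNIV "ur_w A B"] unfolding Qv_def faithful_a_def
  by (auto dest: te_trancl)

lemma Qv_trans: "x \<in> Qv A B v \<Longrightarrow> Qv A B (Inr x) \<subseteq> Qv A B v"
  unfolding Qv_def using te_trans_faithful[OF fa2] by blast

lemma S_inj: "Qv A B (Inr k) = Qv A B (Inr m) \<Longrightarrow> k = m"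
proof (rule ccontr)
  assume eq: "Qv A B (Inr k) = Qv A B (Inr m)" and ne: "k \<noteq> m"
  have "k \<in> Qv A B (Inr m)" "m \<in> Qv A B (Inr k)" using eq Qv_inr by auto
  then have "(Inr m, Inr k) \<in> (wedges UNIV (ur_w A B))\<^sup>+" "(Inr k, Inr m) \<in> (wedges UNIV (ur_w A B))\<^sup>+"
    using Qv_inr ne by auto
  then show False using nc2 by (meson trancl_trans)
qed

lemma child_iff: "ur_aog_child A B h i \<longleftrightarrow> Qv A B (Inl h) = Qv A B (Inr i)"
proof -
  let ?E = "wedges UNIV (ur_w A B)"
  show ?thesis
  proof
    assume ch: "ur_aog_child A B h i"
    have hi: "(Inl h, Inr i) \<in> ?E" using ch by (simp add: ur_aog_child_def ur_children_def urE_iff)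
    have kid: "k = i \<or> (Inr i, Inr k) \<in> ?E\<^sup>+" if "B $ k $ h \<noteq> 0" for k
      using ch that by (auto simp: ur_aog_child_def ur_children_def ur_desc_def)
    have "{x. (Inl h, Inr x) \<in> ?E\<^sup>+} = {x. x = i \<or> (Inr i, Inr x) \<in> ?E\<^sup>+}"
    proof (intro equalityI subsetI)
      fix x assume "x \<in> {x. (Inl h, Inr x) \<in> ?E\<^sup>+}"
      then have "(Inl h, Inr x) \<in> ?E\<^sup>+" by simp
      then obtain c where c: "(Inl h, c) \<in> ?E" "(c, Inr x) \<in> ?E\<^sup>*" by (meson tranclD)
      then obtain k where k: "c = Inr k" "B $ k $ h \<noteq> 0" using inl_edge by blast
      have "k = i \<or> (Inr i, Inr k) \<in> ?E\<^sup>+" using kid k by blast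
      moreover have "k = x \<or> (Inr k, Inr x) \<in> ?E\<^sup>+" using c(2) k(1)
        by (metis rtrancl_eq_or_trancl sum.inject(2))
      ultimately show "x \<in> {x. x = i \<or> (Inr i, Inr x) \<in> ?E\<^sup>+}" by (auto intro: trancl_trans)
    next
      fix x assume "x \<in> {x. x = i \<or> (Inr i, Inr x) \<in> ?E\<^sup>+}"
      then show "x \<in> {x. (Inl h, Inr x) \<in> ?E\<^sup>+}" using hi by (auto intro: trancl_into_trancl2)
    qed
    then show "Qv A B (Inl h) = Qv A B (Inr i)" using Qv_inl Qv_inr by simp
  next
    assume eq: "Qv A B (Inl h) = Qv A B (Inr i)"
    then have eq2: "(Inl h, Inr x) \<in> ?E\<^sup>+ \<longleftrightarrow> x = i \<or> (Inr i, Inr x) \<in> ?E\<^sup>+" for x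
      using Qv_inl Qv_inr by blast
    have "(Inl h, Inr i) \<in> ?E\<^sup>+" using eq2 by blast
    then obtain c where c: "(Inl h, c) \<in> ?E" "(c, Inr i) \<in> ?E\<^sup>*" by (meson tranclD)
    then obtain k where k: "c = Inr k" "B $ k $ h \<noteq> 0" using inl_edge by blast
    then have "(Inl h, Inr k) \<in> ?E\<^sup>+" using c(1) by auto
    then have k2: "k = i \<or> (Inr i, Inr k) \<in> ?E\<^sup>+" using eq2 by blast
    have "k = i"
    proof (rule ccontr)
      assume "k \<noteq> i"
      then have "Inr k \<noteq> (Inr i :: 'h + 'x)" by simp
      then have "(Inr k, Inr i) \<in> ?E\<^sup>+" using c(2) k(1) rtrancl_eq_or_trancl[of "Inr k" "Inr i" ?E] by simp
      then show False using k2 \<open>k \<noteq> i\<close> nc2 by (meson trancl_trans)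
    qed
    then have bi: "B $ i $ h \<noteq> 0" using k by simp
    show "ur_aog_child A B h i" unfolding ur_aog_child_def
    proof
      show "i \<in> ur_children B h" using bi by (simp add: ur_children_def)
      show "\<forall>k\<in>ur_children B h. k \<noteq> i \<longrightarrow> ur_desc A B (Inr i) (Inr k)"
      proof (intro ballI impI)
        fix k assume "k \<in> ur_children B h" "k \<noteq> i"
        then have "(Inl h, Inr k) \<in> ?E\<^sup>+" by (auto simp: ur_children_def urE_iff)
        then show "ur_desc A B (Inr i) (Inr k)" using eq2 \<open>k \<noteq> i\<close> by (simp add: ur_desc_def)
      qed
    qed
  qed
qed

lemma ur_aog_char: "ur_aog A B =
   (\<lambda>i. insert (Inr i) (Inl ` {h. Qv A B (Inl h) = Qv A B (Inr i)})) ` UNIV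
   \<union> (\<lambda>h. {Inl h}) ` {h. \<forall>i. Qv A B (Inl h) \<noteq> Qv A B (Inr i)}"
  unfolding ur_aog_def child_iff by (auto simp: image_def setcompr_eq_image)

end


locale ur_pair =
  fixes A :: "real^'x::finite^'x" and B :: "real^'h::finite^'x"
    and A' :: "real^'x^'x" and B' :: "real^'h^'x"
    and \<sigma> :: "'h + 'x \<Rightarrow> 'h + 'x" and l :: "'h + 'x \<Rightarrow> real"
  assumes sem: "sem_ur A" and sem': "sem_ur A'" and faith: "ur_faithful A B"
    and bij: "bij \<sigma>" and lnz: "\<And>v. l v \<noteq> 0"
    and mix: "\<And>v x. total_effect UNIV (ur_w A' B') (\<sigma> v) (Inr x) = l v * total_effect UNIV (ur_w A B) v (Inr x)"
begin

abbreviation "T \<equiv> total_effect UNIV (ur_w A B)"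
abbreviation "T' \<equiv> total_effect UNIV (ur_w A' B')"
abbreviation "E \<equiv> wedges UNIV (ur_w A B)"
abbreviation "E' \<equiv> wedges UNIV (ur_w A' B')"
abbreviation "Q \<equiv> Qv A B"
abbreviation "Q' \<equiv> Qv A' B'"

lemma fa: "faithful_a UNIV (ur_w A B)" using faith by (simp add: ur_faithful_def)
lemma ac: "acyclic E" using ur_ac[OF sem] .
lemma ac': "acyclic E'" using ur_ac[OF sem'] .
lemma nc: "(v, v) \<notin> E\<^sup>+" using ac by (simp add: acyclic_def)
lemma nc': "(v, v) \<notin> E'\<^sup>+" using ac' by (simp add: acyclic_def)

lemma Qmap: "Q' (\<sigma> v) = Q v" using mix lnz by (simp add: Qv_def)

lemma sinj: "\<sigma> u = \<sigma> v \<longleftrightarrow> u = v" using bij by (meson bij_def injD)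

lemma surj: obtains v where "\<sigma> v = u" using bij by (metis bij_pointE)

lemma inQ: "\<sigma> v = Inr x \<Longrightarrow> x \<in> Q v"
  using mix[of v x] te_self[of "Inr x" UNIV "ur_w A' B'"] by (auto simp: Qv_def)

lemma U2: assumes "\<sigma> (Inr j) = Inr m" shows "j = m"
proof (rule ccontr)
  assume ne: "j \<noteq> m"
  have "m \<in> Q (Inr j)" using inQ assms .
  obtain v2 where v2: "\<sigma> v2 = Inr j" using surj by blast
  have "j \<in> Q v2" using inQ v2 .
  then have "m \<in> Q v2" using Qv_trans[OF sem faith] \<open>m \<in> Q (Inr j)\<close> by blast
  then have "m \<in> Q' (Inr j)" using Qmap v2 by metis
  then have 1: "(Inr j, Inr m) \<in> E'\<^sup>+" using ne te_trancl by (fastforce simp: Qv_def)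
  have "j \<in> Q' (Inr m)" using Qmap[of "Inr j"] assms Qv_inr[OF sem faith] by auto
  then have 2: "(Inr m, Inr j) \<in> E'\<^sup>+" using ne te_trancl by (fastforce simp: Qv_def)
  from 1 2 show False using nc' by (meson trancl_trans)
qed

lemma U3: "Q (Inr k) \<subseteq> Q' (Inr k)"
proof -
  obtain v where v: "\<sigma> v = Inr k" using surj by blast
  have "k \<in> Q v" using inQ v .
  then have "Q (Inr k) \<subseteq> Q v" using Qv_trans[OF sem faith] by blast
  then show ?thesis using Qmap v by metis
qed

lemma U4: assumes eq: "Q' (Inl g) = Q (Inr k)" shows "ur_aog_child A' B' g k"
proof -
  have desc: "z = k \<or> (Inr k, Inr z) \<in> E'\<^sup>+" if "z \<in> Q (Inr k)" for z
  proof -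
    have "T' (Inr k) (Inr z) \<noteq> 0" using U3 that by (auto simp: Qv_def)
    then show ?thesis using te_trancl by fastforce
  qed
  have kid: "y = k \<or> (Inr k, Inr y) \<in> E'\<^sup>+" if hb: "B' $ y $ g \<noteq> 0" for y
  proof (cases "T' (Inl g) (Inr y) = 0")
    case False
    then have "y \<in> Q (Inr k)" using eq by (auto simp: Qv_def)
    then show ?thesis using desc by blast
  next
    case True
    have "T' (Inl g) (Inr y) = (\<Sum>m\<in>UNIV. T' (Inl g) m * ur_w A' B' m (Inr y))"
      using te_last[OF _ ac', of "Inr y" "Inl g"] by simp
    also have "\<dots> = T' (Inl g) (Inl g) * ur_w A' B' (Inl g) (Inr y) + (\<Sum>m\<in>UNIV - {Inl g}. T' (Inl g) m * ur_w A' B' m (Inr y))"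
      by (subst sum.remove[of UNIV "Inl g"]) auto
    finally have "(\<Sum>m\<in>UNIV - {Inl g}. T' (Inl g) m * ur_w A' B' m (Inr y)) \<noteq> 0"
      using True hb te_self[of "Inl g" UNIV "ur_w A' B'"] by simp
    then obtain m where m: "m \<noteq> Inl g" "T' (Inl g) m \<noteq> 0" "ur_w A' B' m (Inr y) \<noteq> 0"
      by (metis (no_types, lifting) DiffD2 insertI1 mult_eq_0_iff sum.neutral)
    obtain j where j: "m = Inr j"
      using m ur_noinl by (metis sum.exhaust)
    have "j \<in> Q (Inr k)" using m(2) j eq by (auto simp: Qv_def)
    then have "j = k \<or> (Inr k, Inr j) \<in> E'\<^sup>+" using desc by blast
    moreover have "(Inr j, Inr y) \<in> E'" using m(3) j by (simp add: urE_iff)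
    ultimately show ?thesis by (auto intro: trancl_into_trancl)
  qed
  have "k \<in> Q (Inr k)" using Qv_inr[OF sem faith] by simp
  then have "T' (Inl g) (Inr k) \<noteq> 0" using eq by (auto simp: Qv_def)
  then have "(Inl g, Inr k) \<in> E'\<^sup>+" using te_trancl by fastforce
  then obtain c where c: "(Inl g, c) \<in> E'" "(c, Inr k) \<in> E'\<^sup>*" by (meson tranclD)
  then obtain y where y: "c = Inr y" "B' $ y $ g \<noteq> 0" using inl_edge by blast
  have "y = k"
  proof (rule ccontr)
    assume "y \<noteq> k"
    then have "(Inr k, Inr y) \<in> E'\<^sup>+" using kid y(2) by blast
    then have "(Inr k, Inr k) \<in> E'\<^sup>+" using c(2) y(1) by (simp add: trancl_rtrancl_trancl)
    then show False using nc' by blast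
  qed
  show ?thesis unfolding ur_aog_child_def
  proof
    show "k \<in> ur_children B' g" using y \<open>y = k\<close> by (simp add: ur_children_def)
    show "\<forall>ka\<in>ur_children B' g. ka \<noteq> k \<longrightarrow> ur_desc A' B' (Inr k) (Inr ka)"
      using kid by (auto simp: ur_children_def ur_desc_def)
  qed
qed


lemma card_J:
  assumes \<pi>: "bij \<pi>" and iso: "ur_aog A' B' = (\<lambda>G. map_sum \<pi> id ` G) ` ur_aog A B"
  shows "card {g. ur_aog_child A' B' g k} = card {h. ur_aog_child A B h k}"
proof -
  let ?J' = "{g. ur_aog_child A' B' g k}"
  let ?J = "{h. ur_aog_child A B h k}"
  have e: "{Inl h | h. ur_aog_child A' B' h k} = Inl ` ?J'" by blast
  have "insert (Inr k) {Inl h | h. ur_aog_child A' B' h k} \<in> ur_aog A' B'"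
    unfolding ur_aog_def by blast
  then have "insert (Inr k) (Inl ` ?J') \<in> (\<lambda>G. map_sum \<pi> id ` G) ` ur_aog A B"
    using iso unfolding e by simp
  then obtain G where G: "G \<in> ur_aog A B" and GG: "insert (Inr k) (Inl ` ?J') = map_sum \<pi> id ` G"
    by (rule imageE)
  have "(\<exists>i. G = insert (Inr i) {Inl h | h. ur_aog_child A B h i}) \<or> (\<exists>h. G = {Inl h})"
    using G unfolding ur_aog_def by blast
  then show ?thesis
  proof
    assume "\<exists>i. G = insert (Inr i) {Inl h | h. ur_aog_child A B h i}"
    then obtain i where "G = insert (Inr i) {Inl h | h. ur_aog_child A B h i}" by blast
    moreover have "{Inl h | h. ur_aog_child A B h i} = Inl ` {h. ur_aog_child A B h i}" by blast
    ultimately have Gi: "G = insert (Inr i) (Inl ` {h. ur_aog_child A B h i})" by metis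
    have im: "map_sum \<pi> id ` G = insert (Inr i) (Inl ` \<pi> ` {h. ur_aog_child A B h i})"
      unfolding Gi by (simp add: image_image)
    have "Inr k \<in> map_sum \<pi> id ` G" using GG by blast
    then have "Inr k \<in> insert (Inr i) (Inl ` \<pi> ` {h. ur_aog_child A B h i})" using im by simp
    then have "i = k" by blast
    then have ins: "insert (Inr k) (Inl ` ?J') = insert (Inr k) (Inl ` \<pi> ` ?J)" using GG im by simp
    have "(Inl ` ?J' :: ('h + 'x) set) = Inl ` \<pi> ` ?J"
    proof -
      have "Inl ` ?J' = insert (Inr k) (Inl ` ?J') - {Inr k}" by blast
      also have "\<dots> = insert (Inr k) (Inl ` \<pi> ` ?J) - {Inr k}" using ins by simp
      also have "\<dots> = Inl ` \<pi> ` ?J" by blast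
      finally show ?thesis .
    qed
    then have "?J' = \<pi> ` ?J" by (simp add: inj_image_eq_iff)
    moreover have "inj_on \<pi> ?J" using \<pi> by (meson bij_def inj_on_subset subset_UNIV)
    ultimately show ?thesis by (simp add: card_image)
  next
    assume "\<exists>h. G = {Inl h}"
    then obtain h where "G = {Inl h}" by blast
    then have "Inr k \<in> {Inl (\<pi> h)}" using GG by (metis image_empty image_insert insertI1 map_sum.simps(1))
    then show ?thesis by simp
  qed
qed

definition bad where "bad k \<longleftrightarrow> (\<exists>h. \<sigma> (Inl h) = Inr k \<and> Q (Inl h) \<noteq> Q (Inr k))"

lemma bad_step:
  assumes \<pi>: "bij \<pi>" and iso: "ur_aog A' B' = (\<lambda>G. map_sum \<pi> id ` G) ` ur_aog A B"
    and b: "bad k"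
  shows "\<exists>m. bad m \<and> (Inr k, Inr m) \<in> E\<^sup>+"
proof -
  obtain hk where hk: "\<sigma> (Inl hk) = Inr k" "Q (Inl hk) \<noteq> Q (Inr k)" using b by (auto simp: bad_def)
  obtain gk where gk: "\<sigma> (Inr k) = Inl gk"
  proof (cases "\<sigma> (Inr k)")
    case (Inl g) then show ?thesis using that by blast
  next
    case (Inr y)
    then have "k = y" using U2 by blast
    then have "\<sigma> (Inr k) = \<sigma> (Inl hk)" using Inr hk by simp
    then show ?thesis using sinj by blast
  qed
  have gkJ: "ur_aog_child A' B' gk k" using U4 Qmap[of "Inr k"] gk by simp
  let ?J' = "{g. ur_aog_child A' B' g k}"
  let ?J = "{h. ur_aog_child A B h k}"
  have J: "?J = {h. Q (Inl h) = Q (Inr k)}" using child_iff[OF sem faith] by simp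
  have "\<exists>h\<in>?J. \<exists>m. \<sigma> (Inl h) = Inr m"
  proof (rule ccontr)
    assume neg: "\<not> (\<exists>h\<in>?J. \<exists>m. \<sigma> (Inl h) = Inr m)"
    have lat: "\<sigma> (Inl h) = Inl (projl (\<sigma> (Inl h)))" if hJ: "h \<in> ?J" for h
    proof (cases "\<sigma> (Inl h)")
      case (Inl g) then show ?thesis by simp
    next
      case (Inr m) then show ?thesis using neg hJ by blast
    qed
    define f where "f h = projl (\<sigma> (Inl h))" for h
    have fJ: "f h \<in> ?J'" if "h \<in> ?J" for h
    proof -
      have "Q' (Inl (f h)) = Q (Inl h)" using Qmap[of "Inl h"] lat[OF that] by (simp add: f_def)
      also have "\<dots> = Q (Inr k)" using that J by simp
      finally show ?thesis using U4 by simp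
    qed
    have finj: "inj_on f ?J"
    proof
      fix h1 h2 assume "h1 \<in> ?J" "h2 \<in> ?J" "f h1 = f h2"
      then have "\<sigma> (Inl h1) = \<sigma> (Inl h2)" using lat[of h1] lat[of h2] unfolding f_def by simp
      then show "h1 = h2" using sinj by simp
    qed
    have gnot: "gk \<notin> f ` ?J"
    proof
      assume "gk \<in> f ` ?J"
      then obtain h where "h \<in> ?J" "f h = gk" by blast
      then have "\<sigma> (Inl h) = \<sigma> (Inr k)" using lat[of h] gk unfolding f_def by simp
      then show False using sinj by simp
    qed
    have sub: "insert gk (f ` ?J) \<subseteq> ?J'" using fJ gkJ by blast
    have "card (insert gk (f ` ?J)) = Suc (card ?J)"
      using gnot finj by (simp add: card_image)
    moreover have "card (insert gk (f ` ?J)) \<le> card ?J'" using sub by (simp add: card_mono)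
    ultimately show False using card_J[OF \<pi> iso, of k] by simp
  qed
  then obtain h m where h: "h \<in> ?J" "\<sigma> (Inl h) = Inr m" by blast
  have Qh: "Q (Inl h) = Q (Inr k)" using h(1) J by simp
  have "m \<noteq> k"
  proof
    assume "m = k"
    then have "\<sigma> (Inl h) = \<sigma> (Inl hk)" using h(2) hk(1) by simp
    then have "h = hk" using sinj by simp
    then show False using Qh hk(2) by simp
  qed
  have "bad m"
  proof -
    have "Q (Inr k) \<noteq> Q (Inr m)" using S_inj[OF sem faith] \<open>m \<noteq> k\<close> by metis
    then show ?thesis using h(2) Qh by (auto simp: bad_def)
  qed
  moreover have "m \<in> Q (Inr k)" using inQ[OF h(2)] Qh by simp
  then have "(Inr k, Inr m) \<in> E\<^sup>+" using Qv_inr[OF sem faith] \<open>m \<noteq> k\<close> by auto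
  ultimately show ?thesis by blast
qed

lemma no_bad:
  assumes \<pi>: "bij \<pi>" and iso: "ur_aog A' B' = (\<lambda>G. map_sum \<pi> id ` G) ` ur_aog A B"
  shows "\<not> bad k"
proof -
  have wf1: "wf (E\<inverse>)" using finite_acyclic_wf_converse[OF finite_wedges ac] by simp
  then have "wf ((E\<inverse>)\<^sup>+)" by (rule wf_trancl)
  then have wf2: "wf (inv_image ((E\<inverse>)\<^sup>+) Inr)" by (rule wf_inv_image)
  show ?thesis
  proof (induction k rule: wf_induct[OF wf2])
    case (1 k)
    show ?case
    proof
      assume "bad k"
      then obtain m where m: "bad m" "(Inr k, Inr m) \<in> E\<^sup>+" using bad_step[OF \<pi> iso] by blast
      then have "(m, k) \<in> inv_image ((E\<inverse>)\<^sup>+) Inr" by (simp add: trancl_converse)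
      then show False using 1 m(1) by blast
    qed
  qed
qed

lemma U7:
  assumes \<pi>: "bij \<pi>" and iso: "ur_aog A' B' = (\<lambda>G. map_sum \<pi> id ` G) ` ur_aog A B"
    and v: "\<sigma> v = Inr m"
  shows "Q v \<subseteq> Q (Inr m)"
proof (cases v)
  case (Inr j) then show ?thesis using U2 v by blast
next
  case (Inl h) then show ?thesis using no_bad[OF \<pi> iso, of m] v by (auto simp: bad_def)
qed

lemma ur_part1:
  assumes \<pi>: "bij \<pi>" and iso: "ur_aog A' B' = (\<lambda>G. map_sum \<pi> id ` G) ` ur_aog A B"
  shows "ur_faithful A' B'"
proof -
  have tr: "T' a d \<noteq> 0" if ab: "T' a b \<noteq> 0" and bd: "T' b d \<noteq> 0" for a b d
  proof (cases "a = b \<or> b = d")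
    case True then show ?thesis using ab bd by auto
  next
    case False
    obtain m where bm: "b = Inr m"
      using ab False ur_noinl by (metis sum.exhaust)
    obtain y where dy: "d = Inr y"
      using bd False ur_noinl by (metis sum.exhaust)
    obtain \<alpha> where al: "\<sigma> \<alpha> = a" using surj by blast
    obtain \<mu> where mu: "\<sigma> \<mu> = Inr m" using surj by blast
    have "m \<in> Q \<alpha>" using ab bm al Qmap[of \<alpha>] by (auto simp: Qv_def)
    then have 1: "Q (Inr m) \<subseteq> Q \<alpha>" using Qv_trans[OF sem faith] by blast
    have "y \<in> Q \<mu>" using bd bm dy mu Qmap[of \<mu>] by (auto simp: Qv_def)
    then have "y \<in> Q \<alpha>" using U7[OF \<pi> iso mu] 1 by blast
    then show ?thesis using al dy Qmap[of \<alpha>] by (auto simp: Qv_def)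
  qed
  show ?thesis unfolding ur_faithful_def
    by (rule faithful_from_trans[OF _ ac']) (use tr in auto)
qed


lemma ur_part2:
  assumes faith': "ur_faithful A' B'"
  shows "\<exists>\<pi>. bij \<pi> \<and> ur_aog A' B' = (\<lambda>G. map_sum \<pi> id ` G) ` ur_aog A B"
proof -
  have S': "Q' (Inr x) = Q (Inr x)" for x
  proof
    show "Q (Inr x) \<subseteq> Q' (Inr x)" using U3 .
    have "x \<in> Q' (\<sigma> (Inr x))" using Qmap[of "Inr x"] Qv_inr[OF sem faith] by simp
    then have "Q' (Inr x) \<subseteq> Q' (\<sigma> (Inr x))" using Qv_trans[OF sem' faith'] by blast
    then show "Q' (Inr x) \<subseteq> Q (Inr x)" using Qmap by simp
  qed
  have lat: "\<exists>g. \<sigma> (Inr x) = Inl g" if "\<sigma> (Inl h) = Inr x" for h x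
  proof (cases "\<sigma> (Inr x)")
    case (Inl g) then show ?thesis by blast
  next
    case (Inr y)
    then have "x = y" using U2 by blast
    then have "\<sigma> (Inr x) = \<sigma> (Inl h)" using Inr that by simp
    then show ?thesis using sinj by simp
  qed
  define \<pi> where "\<pi> h = (case \<sigma> (Inl h) of Inl g \<Rightarrow> g | Inr x \<Rightarrow> projl (\<sigma> (Inr x)))" for h
  have \<pi>cases: "(\<sigma> (Inl h) = Inl (\<pi> h)) \<or> (\<exists>x. \<sigma> (Inl h) = Inr x \<and> \<sigma> (Inr x) = Inl (\<pi> h))" for h
  proof (cases "\<sigma> (Inl h)")
    case (Inl g) then show ?thesis by (simp add: \<pi>_def)
  next
    case (Inr x)
    then obtain g where "\<sigma> (Inr x) = Inl g" using lat by blast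
    then show ?thesis using Inr by (simp add: \<pi>_def)
  qed
  have Q\<pi>: "Q' (Inl (\<pi> h)) = Q (Inl h)" for h
    using \<pi>cases[of h]
  proof
    assume "\<sigma> (Inl h) = Inl (\<pi> h)" then show ?thesis using Qmap[of "Inl h"] by simp
  next
    assume "\<exists>x. \<sigma> (Inl h) = Inr x \<and> \<sigma> (Inr x) = Inl (\<pi> h)"
    then obtain x where x: "\<sigma> (Inl h) = Inr x" "\<sigma> (Inr x) = Inl (\<pi> h)" by blast
    have "Q' (Inl (\<pi> h)) = Q (Inr x)" using Qmap[of "Inr x"] x(2) by simp
    also have "\<dots> = Q' (Inr x)" using S' by simp
    also have "\<dots> = Q (Inl h)" using Qmap[of "Inl h"] x(1) by simp
    finally show ?thesis .
  qed
  have inj\<pi>: "inj \<pi>"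
  proof
    fix h1 h2 assume eq: "\<pi> h1 = \<pi> h2"
    show "h1 = h2"
      using \<pi>cases[of h1] \<pi>cases[of h2]
    proof (elim disjE exE conjE)
      assume "\<sigma> (Inl h1) = Inl (\<pi> h1)" "\<sigma> (Inl h2) = Inl (\<pi> h2)"
      then have "\<sigma> (Inl h1) = \<sigma> (Inl h2)" using eq by simp
      then show ?thesis using sinj by simp
    next
      fix x assume a: "\<sigma> (Inl h1) = Inl (\<pi> h1)" "\<sigma> (Inr x) = Inl (\<pi> h2)"
      then have "\<sigma> (Inl h1) = \<sigma> (Inr x)" using eq by simp
      then show ?thesis using sinj by simp
    next
      fix x assume a: "\<sigma> (Inr x) = Inl (\<pi> h1)" "\<sigma> (Inl h2) = Inl (\<pi> h2)"
      then have "\<sigma> (Inl h2) = \<sigma> (Inr x)" using eq by simp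
      then show ?thesis using sinj by simp
    next
      fix x y assume a: "\<sigma> (Inl h1) = Inr x" "\<sigma> (Inr x) = Inl (\<pi> h1)"
        "\<sigma> (Inl h2) = Inr y" "\<sigma> (Inr y) = Inl (\<pi> h2)"
      then have "\<sigma> (Inr x) = \<sigma> (Inr y)" using eq by simp
      then have "x = y" using sinj by simp
      then have "\<sigma> (Inl h1) = \<sigma> (Inl h2)" using a by simp
      then show ?thesis using sinj by simp
    qed
  qed
  then have bij\<pi>: "bij \<pi>" using finite_UNIV_inj_surj[of \<pi>] by (simp add: bij_def)
  have key: "\<pi> ` {h. P (Q (Inl h))} = {g. P (Q' (Inl g))}" for P
  proof (intro equalityI subsetI)
    fix g assume "g \<in> \<pi> ` {h. P (Q (Inl h))}"
    then show "g \<in> {g. P (Q' (Inl g))}" using Q\<pi> by auto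
  next
    fix g assume g: "g \<in> {g. P (Q' (Inl g))}"
    obtain h where "\<pi> h = g" using bij\<pi> by (metis bij_pointE)
    then show "g \<in> \<pi> ` {h. P (Q (Inl h))}" using g Q\<pi>[of h] by auto
  qed
  have 1: "(\<lambda>G. map_sum \<pi> id ` G) ` ((\<lambda>i. insert (Inr i) (Inl ` {h. Q (Inl h) = Q (Inr i)})) ` UNIV)
     = (\<lambda>i. insert (Inr i) (Inl ` {h. Q' (Inl h) = Q' (Inr i)})) ` UNIV"
  proof -
    have "map_sum \<pi> id ` insert (Inr i) (Inl ` {h. Q (Inl h) = Q (Inr i)})
        = insert (Inr i) (Inl ` {h. Q' (Inl h) = Q' (Inr i)})" for i
    proof -
      have "map_sum \<pi> id ` insert (Inr i) (Inl ` {h. Q (Inl h) = Q (Inr i)})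
          = insert (Inr i) (Inl ` \<pi> ` {h. Q (Inl h) = Q (Inr i)})" by (simp add: image_image)
      also have "\<pi> ` {h. Q (Inl h) = Q (Inr i)} = {h. Q' (Inl h) = Q' (Inr i)}"
        using key[of "\<lambda>S. S = Q (Inr i)"] S' by simp
      finally show ?thesis .
    qed
    then show ?thesis by (simp add: image_image)
  qed
  have 2: "(\<lambda>G. map_sum \<pi> id ` G) ` ((\<lambda>h. {Inl h}) ` {h. \<forall>i. Q (Inl h) \<noteq> Q (Inr i)})
     = (\<lambda>h. {Inl h}) ` {h. \<forall>i. Q' (Inl h) \<noteq> Q' (Inr i)}"
  proof -
    have "(\<lambda>G. map_sum \<pi> id ` G) ` ((\<lambda>h. {Inl h}) ` {h. \<forall>i. Q (Inl h) \<noteq> Q (Inr i)})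
        = (\<lambda>h. {Inl h}) ` (\<pi> ` {h. \<forall>i. Q (Inl h) \<noteq> Q (Inr i)})" by (simp add: image_image)
    also have "\<pi> ` {h. \<forall>i. Q (Inl h) \<noteq> Q (Inr i)} = {h. \<forall>i. Q' (Inl h) \<noteq> Q' (Inr i)}"
      using key[of "\<lambda>S. \<forall>i. S \<noteq> Q (Inr i)"] S' by simp
    finally show ?thesis .
  qed
  have "ur_aog A' B' = (\<lambda>G. map_sum \<pi> id ` G) ` ur_aog A B"
    unfolding ur_aog_char[OF sem faith] ur_aog_char[OF sem' faith'] image_Un 1 2 ..
  then show ?thesis using bij\<pi> by blast
qed

end


lemma equiv_pair_ur:
  fixes A A' :: "real^'x::finite^'x" and B B' :: "real^'h::finite^'x"
  assumes "sem_ur A" "sem_ur A'" "ur_faithful A B" "ur_mix_equiv A B A' B'"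
  shows "\<exists>\<sigma> l. ur_pair A B A' B' \<sigma> l"
proof -
  obtain \<sigma> l where b: "bij \<sigma>" and l: "\<forall>col. l col \<noteq> 0"
    and m: "\<forall>i col. ur_mix A' B' i (\<sigma> col) = l col * ur_mix A B i col"
    using assms(4) unfolding ur_mix_equiv_def by blast
  have "ur_pair A B A' B' \<sigma> l"
    using assms b l m by unfold_locales (auto simp: ur_mix_te)
  then show ?thesis by blast
qed

theorem UR_main:
  fixes A :: "real^'x::finite^'x" and B :: "real^'h::finite^'x"
  assumes sem: "sem_ur A" and faith: "ur_faithful A B"
  shows "(\<forall>(A', B') \<in> ur_aog_class A B. ur_faithful A' B') \<and>
         (\<forall>A' B'. sem_ur A' \<and> ur_mix_equiv A B A' B' \<and> ur_faithful A' B'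
                \<longrightarrow> (A', B') \<in> ur_aog_class A B) \<and>
         {(A', B'). sem_ur A' \<and> ur_mix_equiv A B A' B' \<and> ur_faithful A' B'} = ur_aog_class A B"
proof -
  have P1: "ur_faithful A' B'" if a: "(A', B') \<in> ur_aog_class A B" for A' B'
  proof -
    obtain \<pi> where c: "sem_ur A'" "ur_mix_equiv A B A' B'" "bij \<pi>"
      "ur_aog A' B' = (\<lambda>G. map_sum \<pi> id ` G) ` ur_aog A B"
      using a by (auto simp: ur_aog_class_def)
    obtain \<sigma> l where "ur_pair A B A' B' \<sigma> l" using equiv_pair_ur[OF sem c(1) faith c(2)] by blast
    then show ?thesis using ur_pair.ur_part1 c(3,4) by blast
  qed
  have P2: "(A', B') \<in> ur_aog_class A B"
    if a: "sem_ur A'" "ur_mix_equiv A B A' B'" "ur_faithful A' B'" for A' B'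
  proof -
    obtain \<sigma> l where "ur_pair A B A' B' \<sigma> l" using equiv_pair_ur[OF sem a(1) faith a(2)] by blast
    then have "\<exists>\<pi>. bij \<pi> \<and> ur_aog A' B' = (\<lambda>G. map_sum \<pi> id ` G) ` ur_aog A B"
      using ur_pair.ur_part2 a(3) by blast
    then show ?thesis using a by (simp add: ur_aog_class_def)
  qed
  show ?thesis
  proof (intro conjI)
    show "\<forall>(A', B') \<in> ur_aog_class A B. ur_faithful A' B'" using P1 by blast
    show "\<forall>A' B'. sem_ur A' \<and> ur_mix_equiv A B A' B' \<and> ur_faithful A' B' \<longrightarrow> (A', B') \<in> ur_aog_class A B"
      using P2 by blast
    show "{(A', B'). sem_ur A' \<and> ur_mix_equiv A B A' B' \<and> ur_faithful A' B'} = ur_aog_class A B"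
    proof (intro equalityI subsetI)
      fix z assume "z \<in> {(A', B'). sem_ur A' \<and> ur_mix_equiv A B A' B' \<and> ur_faithful A' B'}"
      then show "z \<in> ur_aog_class A B" using P2 by auto
    next
      fix z assume z: "z \<in> ur_aog_class A B"
      obtain A' B' where zz: "z = (A', B')" by (cases z)
      then have "ur_faithful A' B'" using P1 z by blast
      then show "z \<in> {(A', B'). sem_ur A' \<and> ur_mix_equiv A B A' B' \<and> ur_faithful A' B'}"
        using z zz by (auto simp: ur_aog_class_def)
    qed
  qed
qed

theorem theorem2:
  shows "(\<forall>(p :: nat) (Z :: nat set) (c :: nat \<Rightarrow> nat \<Rightarrow> real).
            sem_me p Z c \<and> me_faithful p c \<longrightarrow>
              (\<forall>c' \<in> me_aog_class p Z c. me_faithful p c') \<and>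
              (\<forall>c'. sem_me p Z c' \<and> me_mix_equiv p Z c c' \<and> me_faithful p c'
                     \<longrightarrow> c' \<in> me_aog_class p Z c) \<and>
              {c'. sem_me p Z c' \<and> me_mix_equiv p Z c c' \<and> me_faithful p c'} = me_aog_class p Z c)
       \<and> (\<forall>(A :: real^'x::finite^'x) (B :: real^'h::finite^'x).
            sem_ur A \<and> ur_faithful A B \<longrightarrow>
              (\<forall>(A', B') \<in> ur_aog_class A B. ur_faithful A' B') \<and>
              (\<forall>A' B'. sem_ur A' \<and> ur_mix_equiv A B A' B' \<and> ur_faithful A' B'
                     \<longrightarrow> (A', B') \<in> ur_aog_class A B) \<and>
              {(A', B'). sem_ur A' \<and> ur_mix_equiv A B A' B' \<and> ur_faithful A' B'} = ur_aog_class A B)"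
  using ME_main UR_main by blast

end
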